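(* Let $(\mathfrak{g},V,\Theta)$ be a Lie-Leibniz triple, let $\mathfrak{h}=\mathrm{Im}(\Theta)$, and let $(T_{\leq-1},\llbracket\,.\,,.\,\rrbracket)$ be its associated negatively graded Lie algebra. Then there exists a unique family of $\mathfrak{h}$-equivariant linear maps $\partial=(\partial_{-i}:T_{-i-1}\to T_{-i})_{i\geq1}$ (a degree $+1$ map, extended as a graded derivation of $\Lambda^\bullet(T_{\leq-1})$) such that $\partial\llbracket u,v\rrbracket=2\{u,v\}$, $\partial\llbracket u,x\rrbracket=\Theta(u)\cdot x-\llbracket u,\partial(x)\rrbracket$, $\partial\llbracket x,y\rrbracket=\llbracket\partial(x),y\rrbracket+(-1)^{|x|}\llbracket x,\partial(y)\rrbracket$ for all $u,v\in T_{-1}$ and $x,y\in T_{\leq-2}$. Moreover $\partial_{-i}\circ\partial_{-i-1}=0$ for every $i\geq1$.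
   Context: A (left) Leibniz algebra is a vector space $V$ with bilinear $\circ$ satisfying $x\circ(y\circ z)=(x\circ y)\circ z+y\circ(x\circ z)$; $\{x,y\}=\frac12(x\circ y+y\circ x)$. A Lie-Leibniz triple $(\mathfrak{g},V,\Theta)$ consists of a Lie algebra $\mathfrak{g}$, a $\mathfrak{g}$-module $V$ (action $a\cdot x$) with a Leibniz product $\circ$, and a linear map $\Theta:V\to\mathfrak{g}$ with $x\circ y=\Theta(x)\cdot y$ and $\Theta(x\circ y)=[\Theta(x),\Theta(y)]$. Associated graded Lie algebra: let $K$ be the largest $\mathfrak{g}$-submodule of $S^2(V)$ contained in the kernel of $S^2(V)\to V$, $x\odot y\mapsto\{x,y\}$. Let $F=\bigoplus_{i\geq1}F_{-i}$ be the free graded Lie algebra generated by $V[1]$ (a copy of $V$ in degree $-1$); identify $F_{-2}$ with $S^2(V)$ via $[x,y]\leftrightarrow x\odot y$, and let $\mathfrak g$ act on $F$ by the unique derivations extending its action on $V$. Put $K_{-2}=K$ and $K_{-i}=\sum_{j=1}^{i-2}[F_{-j},K_{-i+j}]$ for $i\geq3$; $K_\bullet$ is a graded Lie ideal and $\mathfrak{g}$-submodule of $F$. Define $T_{-1}=V[1]$, $T_{-i}=F_{-i}/K_{-i}$ ($i\ge2$), $T_{\leq-1}=F/K_\bullet$ with the induced bracket $\llbracket\,.\,,.\,\rrbracket$ and $\mathfrak{g}$-action. $\mathfrak{h}$-equivariance of $\partial_{-i}$ means $\partial_{-i}(a\cdot x)=a\cdot\partial_{-i}(x)$ for $a\in\mathfrak{h}$.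 Here $T_{\leq -2}=\bigoplus_{i\ge2}T_{-i}$. *)

theory Defs
  imports Complex_Main "HOL-Library.Function_Algebras"
begin

definition lie_algebra :: "('k::field \<Rightarrow> 'g::ab_group_add \<Rightarrow> 'g) \<Rightarrow> ('g \<Rightarrow> 'g \<Rightarrow> 'g) \<Rightarrow> bool" where
  "lie_algebra sG brg \<longleftrightarrow> Vector_Spaces.vector_space sG
     \<and> (\<forall>a. Vector_Spaces.linear sG sG (brg a)) \<and> (\<forall>b. Vector_Spaces.linear sG sG (\<lambda>a. brg a b))
     \<and> (\<forall>a. brg a a = 0)
     \<and> (\<forall>a b c. brg a (brg b c) = brg (brg a b) c + brg b (brg a c))"

definition lie_module :: "('k::field \<Rightarrow> 'g::ab_group_add \<Rightarrow> 'g) \<Rightarrow> ('g \<Rightarrow> 'g \<Rightarrow> 'g)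
     \<Rightarrow> ('k \<Rightarrow> 'v::ab_group_add \<Rightarrow> 'v) \<Rightarrow> ('g \<Rightarrow> 'v \<Rightarrow> 'v) \<Rightarrow> bool" where
  "lie_module sG brg sV act \<longleftrightarrow> Vector_Spaces.vector_space sV
     \<and> (\<forall>a. Vector_Spaces.linear sV sV (act a)) \<and> (\<forall>x. Vector_Spaces.linear sG sV (\<lambda>a. act a x))
     \<and> (\<forall>a b x. act (brg a b) x = act a (act b x) - act b (act a x))"

definition leibniz :: "('k::field \<Rightarrow> 'v::ab_group_add \<Rightarrow> 'v) \<Rightarrow> ('v \<Rightarrow> 'v \<Rightarrow> 'v) \<Rightarrow> bool" where
  "leibniz sV circ \<longleftrightarrow> (\<forall>x. Vector_Spaces.linear sV sV (circ x)) \<and> (\<forall>y. Vector_Spaces.linear sV sV (\<lambda>x. circ x y))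
     \<and> (\<forall>x y z. circ x (circ y z) = circ (circ x y) z + circ y (circ x z))"

definition lie_leibniz_triple :: "('k::field \<Rightarrow> 'g::ab_group_add \<Rightarrow> 'g) \<Rightarrow> ('g \<Rightarrow> 'g \<Rightarrow> 'g)
     \<Rightarrow> ('k \<Rightarrow> 'v::ab_group_add \<Rightarrow> 'v) \<Rightarrow> ('g \<Rightarrow> 'v \<Rightarrow> 'v) \<Rightarrow> ('v \<Rightarrow> 'v \<Rightarrow> 'v) \<Rightarrow> ('v \<Rightarrow> 'g) \<Rightarrow> bool" where
  "lie_leibniz_triple sG brg sV act circ Theta \<longleftrightarrow>
     lie_algebra sG brg \<and> lie_module sG brg sV act \<and> leibniz sV circ \<and> Vector_Spaces.linear sV sG Theta
     \<and> (\<forall>x y. circ x y = act (Theta x) y)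
     \<and> (\<forall>x y. Theta (circ x y) = brg (Theta x) (Theta y))"

definition anticomm :: "('k::field \<Rightarrow> 'v::ab_group_add \<Rightarrow> 'v) \<Rightarrow> ('v \<Rightarrow> 'v \<Rightarrow> 'v) \<Rightarrow> 'v \<Rightarrow> 'v \<Rightarrow> 'v" where
  "anticomm sV circ x y = sV (1/2) (circ x y + circ y x)"

text \<open>Binary trees with leaves in V; a tree with n leaves has degree -n.
  The free graded Lie algebra F is realised as finitely supported formal
  linear combinations of trees (W) modulo multilinearity in the leaves,
  graded antisymmetry and graded Jacobi (the ideal R0).\<close>

datatype 'v ltree = Leaf 'v | Node "'v ltree" "'v ltree"

fun nleaves :: "'v ltree \<Rightarrow> nat" where
  "nleaves (Leaf x) = 1"
| "nleaves (Node s t) = nleaves s + nleaves t"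

definition supp :: "('v ltree \<Rightarrow> 'k::zero) \<Rightarrow> 'v ltree set" where
  "supp f = {t. f t \<noteq> 0}"

definition Wc :: "('v ltree \<Rightarrow> 'k::field) set" where
  "Wc = {f. finite (supp f)}"

definition Wdeg :: "nat \<Rightarrow> ('v ltree \<Rightarrow> 'k::field) set" where
  "Wdeg i = {f. finite (supp f) \<and> (\<forall>t. f t \<noteq> 0 \<longrightarrow> nleaves t = i)}"

definition ind :: "'v ltree \<Rightarrow> 'v ltree \<Rightarrow> 'k::field" where
  "ind t = (\<lambda>r. if r = t then 1 else 0)"

definition sW :: "'k::field \<Rightarrow> ('v ltree \<Rightarrow> 'k) \<Rightarrow> ('v ltree \<Rightarrow> 'k)" where
  "sW c f = (\<lambda>t. c * f t)"

definition br :: "('v ltree \<Rightarrow> 'k::field) \<Rightarrow> ('v ltree \<Rightarrow> 'k) \<Rightarrow> ('v ltree \<Rightarrow> 'k)" where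
  "br f g = (\<lambda>r. case r of Leaf _ \<Rightarrow> 0 | Node s t \<Rightarrow> f s * g t)"

inductive_set R0 :: "('k::field \<Rightarrow> 'v::ab_group_add \<Rightarrow> 'v) \<Rightarrow> ('v ltree \<Rightarrow> 'k) set"
  for sV :: "'k \<Rightarrow> 'v \<Rightarrow> 'v" where
  lin_add: "ind (Leaf (x + y)) - ind (Leaf x) - ind (Leaf y) \<in> R0 sV"
| lin_scale: "ind (Leaf (sV c x)) - sW c (ind (Leaf x)) \<in> R0 sV"
| antisym: "br (ind s) (ind t) + sW ((-1) ^ (nleaves s * nleaves t)) (br (ind t) (ind s)) \<in> R0 sV"
| jacobi: "br (ind x) (br (ind y) (ind z)) - br (br (ind x) (ind y)) (ind z)
            - sW ((-1) ^ (nleaves x * nleaves y)) (br (ind y) (br (ind x) (ind z))) \<in> R0 sV"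
| zero: "0 \<in> R0 sV"
| add: "a \<in> R0 sV \<Longrightarrow> b \<in> R0 sV \<Longrightarrow> a + b \<in> R0 sV"
| scale: "a \<in> R0 sV \<Longrightarrow> sW c a \<in> R0 sV"
| ideal_left: "a \<in> R0 sV \<Longrightarrow> w \<in> Wc \<Longrightarrow> br w a \<in> R0 sV"
| ideal_right: "a \<in> R0 sV \<Longrightarrow> w \<in> Wc \<Longrightarrow> br a w \<in> R0 sV"

fun actT :: "('g \<Rightarrow> 'v \<Rightarrow> 'v) \<Rightarrow> 'g \<Rightarrow> 'v ltree \<Rightarrow> ('v ltree \<Rightarrow> 'k::field)" where
  "actT act a (Leaf x) = ind (Leaf (act a x))"
| "actT act a (Node s t) = br (actT act a s) (ind t) + br (ind s) (actT act a t)"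

definition actW :: "('g \<Rightarrow> 'v \<Rightarrow> 'v) \<Rightarrow> 'g \<Rightarrow> ('v ltree \<Rightarrow> 'k::field) \<Rightarrow> ('v ltree \<Rightarrow> 'k)" where
  "actW act a f = (\<Sum>t\<in>supp f. sW (f t) (actT act a t))"

text \<open>The map F_{-2} = S^2(V) -> V,  [x,y] |-> {x,y}, on representatives.\<close>
definition symb :: "('k::field \<Rightarrow> 'v::ab_group_add \<Rightarrow> 'v) \<Rightarrow> ('v \<Rightarrow> 'v \<Rightarrow> 'v) \<Rightarrow> 'v ltree \<Rightarrow> 'v" where
  "symb sV circ t = (case t of Node (Leaf x) (Leaf y) \<Rightarrow> anticomm sV circ x y | _ \<Rightarrow> 0)"

definition sym2 :: "('k::field \<Rightarrow> 'v::ab_group_add \<Rightarrow> 'v) \<Rightarrow> ('v \<Rightarrow> 'v \<Rightarrow> 'v) \<Rightarrow> ('v ltree \<Rightarrow> 'k) \<Rightarrow> 'v" where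
  "sym2 sV circ f = (\<Sum>t\<in>supp f. sV (f t) (symb sV circ t))"

text \<open>(preimages in W_2 of) g-submodules of F_{-2} contained in the kernel of sym2\<close>
definition Ksub :: "('k::field \<Rightarrow> 'v::ab_group_add \<Rightarrow> 'v) \<Rightarrow> ('g \<Rightarrow> 'v \<Rightarrow> 'v) \<Rightarrow> ('v \<Rightarrow> 'v \<Rightarrow> 'v)
      \<Rightarrow> ('v ltree \<Rightarrow> 'k) set \<Rightarrow> bool" where
  "Ksub sV act circ S \<longleftrightarrow> S \<subseteq> Wdeg 2 \<and> 0 \<in> S
     \<and> (\<forall>a\<in>S. \<forall>b\<in>S. a + b \<in> S) \<and> (\<forall>c. \<forall>a\<in>S. sW c a \<in> S)
     \<and> (\<forall>g. \<forall>a\<in>S. actW act g a \<in> S)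
     \<and> (\<forall>a\<in>S. sym2 sV circ a = 0)"

text \<open>the largest such submodule (the union of all of them)\<close>
definition Krep :: "('k::field \<Rightarrow> 'v::ab_group_add \<Rightarrow> 'v) \<Rightarrow> ('g \<Rightarrow> 'v \<Rightarrow> 'v) \<Rightarrow> ('v \<Rightarrow> 'v \<Rightarrow> 'v)
      \<Rightarrow> ('v ltree \<Rightarrow> 'k) set" where
  "Krep sV act circ = \<Union>{S. Ksub sV act circ S}"

text \<open>K_{-2} = K,  K_{-i} = sum_{j=1}^{i-2} [F_{-j}, K_{-i+j}]\<close>
inductive KI :: "('k::field \<Rightarrow> 'v::ab_group_add \<Rightarrow> 'v) \<Rightarrow> ('g \<Rightarrow> 'v \<Rightarrow> 'v) \<Rightarrow> ('v \<Rightarrow> 'v \<Rightarrow> 'v)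
      \<Rightarrow> nat \<Rightarrow> ('v ltree \<Rightarrow> 'k) \<Rightarrow> bool"
  for sV act circ where
  base: "w \<in> Krep sV act circ \<Longrightarrow> KI sV act circ 2 w"
| brk: "3 \<le> i \<Longrightarrow> 1 \<le> j \<Longrightarrow> j \<le> i - 2 \<Longrightarrow> f \<in> Wdeg j \<Longrightarrow> KI sV act circ (i - j) k
          \<Longrightarrow> KI sV act circ i (br f k)"
| zero: "3 \<le> i \<Longrightarrow> KI sV act circ i 0"
| add: "3 \<le> i \<Longrightarrow> KI sV act circ i a \<Longrightarrow> KI sV act circ i b \<Longrightarrow> KI sV act circ i (a + b)"
| scale: "3 \<le> i \<Longrightarrow> KI sV act circ i a \<Longrightarrow> KI sV act circ i (sW c a)"

text \<open>Total relation subspace: T_{<=-1} = F / K_\<bullet> = W / Trel\<close>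
inductive_set Trel :: "('k::field \<Rightarrow> 'v::ab_group_add \<Rightarrow> 'v) \<Rightarrow> ('g \<Rightarrow> 'v \<Rightarrow> 'v) \<Rightarrow> ('v \<Rightarrow> 'v \<Rightarrow> 'v)
      \<Rightarrow> ('v ltree \<Rightarrow> 'k) set"
  for sV act circ where
  rel: "a \<in> R0 sV \<Longrightarrow> a \<in> Trel sV act circ"
| kid: "KI sV act circ i a \<Longrightarrow> a \<in> Trel sV act circ"
| add: "a \<in> Trel sV act circ \<Longrightarrow> b \<in> Trel sV act circ \<Longrightarrow> a + b \<in> Trel sV act circ"
| scale: "a \<in> Trel sV act circ \<Longrightarrow> sW c a \<in> Trel sV act circ"

definition qt :: "('v ltree \<Rightarrow> 'k::field) set \<Rightarrow> ('v ltree \<Rightarrow> 'k) \<Rightarrow> ('v ltree \<Rightarrow> 'k) set" where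
  "qt R w = {w'. w' \<in> Wc \<and> w' - w \<in> R}"

definition rep :: "('v ltree \<Rightarrow> 'k::field) set \<Rightarrow> ('v ltree \<Rightarrow> 'k)" where
  "rep C = (SOME w. w \<in> C)"

definition Tdeg :: "('v ltree \<Rightarrow> 'k::field) set \<Rightarrow> nat \<Rightarrow> ('v ltree \<Rightarrow> 'k) set set" where
  "Tdeg R i = qt R ` Wdeg i"

definition tzero :: "('v ltree \<Rightarrow> 'k::field) set \<Rightarrow> ('v ltree \<Rightarrow> 'k) set" where
  "tzero R = qt R 0"

definition tadd :: "('v ltree \<Rightarrow> 'k::field) set \<Rightarrow> ('v ltree \<Rightarrow> 'k) set \<Rightarrow> ('v ltree \<Rightarrow> 'k) set \<Rightarrow> ('v ltree \<Rightarrow> 'k) set" where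
  "tadd R C D = qt R (rep C + rep D)"

definition tsub :: "('v ltree \<Rightarrow> 'k::field) set \<Rightarrow> ('v ltree \<Rightarrow> 'k) set \<Rightarrow> ('v ltree \<Rightarrow> 'k) set \<Rightarrow> ('v ltree \<Rightarrow> 'k) set" where
  "tsub R C D = qt R (rep C - rep D)"

definition tsc :: "('v ltree \<Rightarrow> 'k::field) set \<Rightarrow> 'k \<Rightarrow> ('v ltree \<Rightarrow> 'k) set \<Rightarrow> ('v ltree \<Rightarrow> 'k) set" where
  "tsc R c C = qt R (sW c (rep C))"

definition tbr :: "('v ltree \<Rightarrow> 'k::field) set \<Rightarrow> ('v ltree \<Rightarrow> 'k) set \<Rightarrow> ('v ltree \<Rightarrow> 'k) set \<Rightarrow> ('v ltree \<Rightarrow> 'k) set" where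
  "tbr R C D = qt R (br (rep C) (rep D))"

definition tact :: "('g \<Rightarrow> 'v \<Rightarrow> 'v) \<Rightarrow> ('v ltree \<Rightarrow> 'k::field) set \<Rightarrow> 'g \<Rightarrow> ('v ltree \<Rightarrow> 'k) set \<Rightarrow> ('v ltree \<Rightarrow> 'k) set" where
  "tact act R a C = qt R (actW act a (rep C))"

definition iota :: "('v ltree \<Rightarrow> 'k::field) set \<Rightarrow> 'v \<Rightarrow> ('v ltree \<Rightarrow> 'k) set" where
  "iota R x = qt R (ind (Leaf x))"

text \<open>d i stands for \<partial>_{-i} : T_{-i-1} -> T_{-i}  (i >= 1).\<close>
definition is_dfamily :: "('k::field \<Rightarrow> 'v::ab_group_add \<Rightarrow> 'v) \<Rightarrow> ('g \<Rightarrow> 'v \<Rightarrow> 'v) \<Rightarrow> ('v \<Rightarrow> 'v \<Rightarrow> 'v)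
     \<Rightarrow> ('v \<Rightarrow> 'g) \<Rightarrow> (nat \<Rightarrow> ('v ltree \<Rightarrow> 'k) set \<Rightarrow> ('v ltree \<Rightarrow> 'k) set) \<Rightarrow> bool" where
  "is_dfamily sV act circ Theta d \<longleftrightarrow>
    (let R = Trel sV act circ in
     \<comment> \<open>linear maps T_{-i-1} -> T_{-i}\<close>
     (\<forall>i\<ge>1. \<forall>X\<in>Tdeg R (Suc i). d i X \<in> Tdeg R i)
   \<and> (\<forall>i\<ge>1. \<forall>X\<in>Tdeg R (Suc i). \<forall>Y\<in>Tdeg R (Suc i). d i (tadd R X Y) = tadd R (d i X) (d i Y))
   \<and> (\<forall>i\<ge>1. \<forall>c. \<forall>X\<in>Tdeg R (Suc i). d i (tsc R c X) = tsc R c (d i X))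
     \<comment> \<open>h-equivariance, h = Im Theta\<close>
   \<and> (\<forall>i\<ge>1. \<forall>a\<in>range Theta. \<forall>X\<in>Tdeg R (Suc i). d i (tact act R a X) = tact act R a (d i X))
     \<comment> \<open>d [[u,v]] = 2{u,v}\<close>
   \<and> (\<forall>x y. d 1 (tbr R (iota R x) (iota R y)) = iota R (sV 2 (anticomm sV circ x y)))
     \<comment> \<open>d [[u,X]] = Theta(u).X - [[u, d X]]\<close>
   \<and> (\<forall>x. \<forall>i\<ge>2. \<forall>X\<in>Tdeg R i.
        d i (tbr R (iota R x) X) = tsub R (tact act R (Theta x) X) (tbr R (iota R x) (d (i - 1) X)))
     \<comment> \<open>d [[X,Y]] = [[d X, Y]] + (-1)^|X| [[X, d Y]]\<close>
   \<and> (\<forall>i\<ge>2. \<forall>j\<ge>2. \<forall>X\<in>Tdeg R i. \<forall>Y\<in>Tdeg R j.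
        d (i + j - 1) (tbr R X Y) = tadd R (tbr R (d (i - 1) X) Y) (tsc R ((-1) ^ i) (tbr R X (d (j - 1) Y)))))"

end

theory Submission
  imports Defs
begin

section \<open>Basic algebra of formal combinations\<close>

declare plus_fun_apply[simp del] zero_fun_apply[simp del] times_fun_apply[simp del]
  one_fun_apply[simp del] minus_apply[simp del] uminus_apply[simp del]
lemmas fun_applies = plus_fun_apply zero_fun_apply minus_apply uminus_apply

lemma sum_fun_apply: "(\<Sum>a\<in>A. f a) x = (\<Sum>a\<in>A. f a x)"
  by (induction A rule: infinite_finite_induct) (auto simp: fun_applies)

lemma supp_ind[simp]: "supp (ind t :: 'v ltree \<Rightarrow> 'k::field) = {t}"
  by (auto simp: supp_def ind_def)

lemma ind_Wc[simp]: "(ind t :: 'v ltree \<Rightarrow> 'k::field) \<in> Wc"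
  by (simp add: Wc_def)

lemma zero_Wc[simp]: "(0 :: 'v ltree \<Rightarrow> 'k::field) \<in> Wc"
  by (simp add: Wc_def supp_def fun_applies)

lemma add_Wc[simp]: "f \<in> Wc \<Longrightarrow> g \<in> Wc \<Longrightarrow> f + g \<in> (Wc :: ('v ltree \<Rightarrow> 'k::field) set)"
  unfolding Wc_def mem_Collect_eq by (rule finite_subset[of _ "supp f \<union> supp g"]) (auto simp: supp_def fun_applies)

lemma uminus_Wc[simp]: "f \<in> Wc \<Longrightarrow> - f \<in> (Wc :: ('v ltree \<Rightarrow> 'k::field) set)"
  unfolding Wc_def by (auto simp: supp_def uminus_apply)

lemma diff_Wc[simp]: "f \<in> Wc \<Longrightarrow> g \<in> Wc \<Longrightarrow> f - g \<in> (Wc :: ('v ltree \<Rightarrow> 'k::field) set)"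
  using add_Wc[of f "-g"] by simp

lemma sW_Wc[simp]: "f \<in> Wc \<Longrightarrow> sW c f \<in> (Wc :: ('v ltree \<Rightarrow> 'k::field) set)"
  unfolding Wc_def mem_Collect_eq by (rule finite_subset[of _ "supp f"]) (auto simp: supp_def sW_def)

lemma sum_Wc[simp]: "(\<And>a. a \<in> A \<Longrightarrow> f a \<in> Wc) \<Longrightarrow> (\<Sum>a\<in>A. f a) \<in> (Wc :: ('v ltree \<Rightarrow> 'k::field) set)"
  by (induction A rule: infinite_finite_induct) auto

lemma br_apply_Node[simp]: "br f g (Node s t) = f s * g t"
  by (simp add: br_def)
lemma br_apply_Leaf[simp]: "br f g (Leaf x) = 0"
  by (simp add: br_def)

lemma br_Wc[simp]: "f \<in> Wc \<Longrightarrow> g \<in> Wc \<Longrightarrow> br f g \<in> (Wc :: ('v ltree \<Rightarrow> 'k::field) set)"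
  unfolding Wc_def mem_Collect_eq
proof (rule finite_subset[of _ "(\<lambda>(s,t). Node s t) ` (supp f \<times> supp g)"])
  show "supp (br f g) \<subseteq> (\<lambda>(s,t). Node s t) ` (supp f \<times> supp g)"
  proof
    fix r assume "r \<in> supp (br f g)"
    then show "r \<in> (\<lambda>(s,t). Node s t) ` (supp f \<times> supp g)"
      by (cases r) (auto simp: supp_def)
  qed
qed auto

lemma sW_simps[simp]:
  "sW c (f + g) = sW c f + sW c g" "sW c (f - g) = sW c f - sW c g" "sW c (- f) = - sW c f"
  "sW c (sW d f) = sW (c * d) f" "sW 1 f = f" "sW 0 f = 0" "sW c 0 = 0" "sW (-1) f = - f"
  by (auto simp: sW_def fun_eq_iff algebra_simps fun_applies)

lemma sW_neg: "sW (- c) f = - sW c f"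
  by (simp add: sW_def fun_eq_iff uminus_apply)

lemma sW_apply: "sW c f x = c * f x"
  by (simp add: sW_def)

lemma sW_add_left: "sW (c + d) f = sW c f + sW d f" and sW_diff_left: "sW (c - d) f = sW c f - sW d f"
  by (auto simp: sW_def fun_eq_iff algebra_simps fun_applies)

lemma sW_sum: "sW c (\<Sum>a\<in>A. f a) = (\<Sum>a\<in>A. sW c (f a))"
  by (induction A rule: infinite_finite_induct) auto

lemma br_simps[simp]:
  "br (f + g) h = br f h + br g h" "br f (g + h) = br f g + br f h"
  "br (f - g) h = br f h - br g h" "br f (g - h) = br f g - br f h"
  "br (- f) h = - br f h" "br f (- h) = - br f h"
  "br (sW c f) g = sW c (br f g)" "br f (sW c g) = sW c (br f g)"
  "br 0 g = 0" "br f 0 = 0"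
  by (auto simp: br_def fun_eq_iff algebra_simps fun_applies sW_def split: ltree.splits)

lemma br_ind_ind[simp]: "br (ind s) (ind t) = ind (Node s t)"
  by (auto simp: br_def ind_def fun_eq_iff split: ltree.splits)

lemma br_sum_left: "br (\<Sum>a\<in>A. f a) g = (\<Sum>a\<in>A. br (f a) g)"
  by (induction A rule: infinite_finite_induct) auto
lemma br_sum_right: "br g (\<Sum>a\<in>A. f a) = (\<Sum>a\<in>A. br g (f a))"
  by (induction A rule: infinite_finite_induct) auto

definition lin :: "('v ltree \<Rightarrow> ('v ltree \<Rightarrow> 'k::field)) \<Rightarrow> ('v ltree \<Rightarrow> 'k) \<Rightarrow> ('v ltree \<Rightarrow> 'k)" where
  "lin \<phi> f = (\<Sum>t\<in>supp f. sW (f t) (\<phi> t))"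

lemma lin_superset: "finite A \<Longrightarrow> supp f \<subseteq> A \<Longrightarrow> lin \<phi> f = (\<Sum>t\<in>A. sW (f t) (\<phi> t))"
  unfolding lin_def by (rule sum.mono_neutral_left) (auto simp: supp_def)

lemma lin_add[simp]: "f \<in> Wc \<Longrightarrow> g \<in> Wc \<Longrightarrow> lin \<phi> (f + g) = lin \<phi> f + lin \<phi> g"
proof -
  assume f: "f \<in> Wc" and g: "g \<in> Wc"
  let ?A = "supp f \<union> supp g"
  have fin: "finite ?A" using f g by (auto simp: Wc_def)
  have "lin \<phi> (f + g) = (\<Sum>t\<in>?A. sW ((f+g) t) (\<phi> t))"
    by (rule lin_superset[OF fin]) (auto simp: supp_def fun_applies)
  also have "\<dots> = (\<Sum>t\<in>?A. sW (f t) (\<phi> t)) + (\<Sum>t\<in>?A. sW (g t) (\<phi> t))"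
    by (simp add: sW_add_left sum.distrib plus_fun_apply)
  also have "\<dots> = lin \<phi> f + lin \<phi> g"
    using lin_superset[OF fin, of f] lin_superset[OF fin, of g] by auto
  finally show ?thesis .
qed

lemma lin_sW[simp]: "lin \<phi> (sW c f) = sW c (lin \<phi> f)"
proof (cases "c = 0")
  case True then show ?thesis by (simp add: lin_def supp_def fun_applies)
next
  case False
  then have "supp (sW c f) = supp f" by (auto simp: supp_def sW_apply)
  then show ?thesis by (simp add: lin_def sW_sum sW_apply)
qed

lemma lin_zero[simp]: "lin \<phi> 0 = 0"
  by (simp add: lin_def supp_def fun_applies)

lemma lin_uminus[simp]: "lin \<phi> (- f) = - lin \<phi> f"
  using lin_sW[of \<phi> "-1" f] by simp

lemma lin_diff[simp]: "f \<in> Wc \<Longrightarrow> g \<in> Wc \<Longrightarrow> lin \<phi> (f - g) = lin \<phi> f - lin \<phi> g"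
  using lin_add[of f "-g" \<phi>] by simp

lemma lin_ind[simp]: "lin \<phi> (ind t) = \<phi> t"
  by (simp add: lin_def ind_def supp_def)

lemma lin_sum: "(\<And>a. a \<in> A \<Longrightarrow> f a \<in> Wc) \<Longrightarrow> lin \<phi> (\<Sum>a\<in>A. f a) = (\<Sum>a\<in>A. lin \<phi> (f a))"
  by (induction A rule: infinite_finite_induct) auto

lemma lin_cong: "(\<And>t. t \<in> supp f \<Longrightarrow> \<phi> t = \<psi> t) \<Longrightarrow> lin \<phi> f = lin \<psi> f"
  by (simp add: lin_def)

lemma expand: "f \<in> Wc \<Longrightarrow> lin ind f = f"
proof -
  assume f: "f \<in> Wc"
  show ?thesis
  proof
    fix r
    have "lin ind f r = (\<Sum>t\<in>supp f. f t * ind t r)"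
      by (simp add: lin_def sum_fun_apply sW_apply)
    also have "\<dots> = (\<Sum>t\<in>supp f. if t = r then f r else 0)"
      by (rule sum.cong) (auto simp: ind_def)
    also have "\<dots> = f r" using f by (auto simp: Wc_def supp_def)
    finally show "lin ind f r = f r" .
  qed
qed

lemma Wc_induct[consumes 1, case_names zero step]:
  assumes f: "f \<in> Wc" and z: "P 0"
    and st: "\<And>c t g. g \<in> Wc \<Longrightarrow> P g \<Longrightarrow> P (sW c (ind t) + g)"
  shows "P f"
proof -
  have fin: "finite (supp f)" using f by (simp add: Wc_def)
  have "\<And>B. B \<subseteq> supp f \<Longrightarrow> P (\<Sum>t\<in>B. sW (f t) (ind t)) \<and> (\<Sum>t\<in>B. sW (f t) (ind t)) \<in> Wc"
  proof -
    fix B assume "B \<subseteq> supp f"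
    then have "finite B" using fin finite_subset by blast
    then show "P (\<Sum>t\<in>B. sW (f t) (ind t)) \<and> (\<Sum>t\<in>B. sW (f t) (ind t)) \<in> Wc"
      by (induction B rule: finite_induct) (auto simp: z st)
  qed
  from this[OF order_refl] have "P (lin ind f)" by (simp add: lin_def)
  then show ?thesis using expand[OF f] by simp
qed

lemma zero_Wdeg[simp]: "(0 :: 'v ltree \<Rightarrow> 'k::field) \<in> Wdeg i"
  by (simp add: Wdeg_def supp_def fun_applies)

lemma add_Wdeg[simp]: "f \<in> Wdeg i \<Longrightarrow> g \<in> Wdeg i \<Longrightarrow> f + g \<in> (Wdeg i :: ('v ltree \<Rightarrow> 'k::field) set)"
  unfolding Wdeg_def mem_Collect_eq
  by (auto simp: plus_fun_apply intro: finite_subset[of _ "supp f \<union> supp g"] simp: supp_def) (metis add.right_neutral)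

lemma sW_Wdeg[simp]: "f \<in> Wdeg i \<Longrightarrow> sW c f \<in> (Wdeg i :: ('v ltree \<Rightarrow> 'k::field) set)"
  unfolding Wdeg_def mem_Collect_eq
  by (auto simp: sW_apply intro: finite_subset[of _ "supp f"] simp: supp_def)

lemma uminus_Wdeg[simp]: "f \<in> Wdeg i \<Longrightarrow> - f \<in> (Wdeg i :: ('v ltree \<Rightarrow> 'k::field) set)"
  using sW_Wdeg[of f i "-1"] by simp

lemma diff_Wdeg[simp]: "f \<in> Wdeg i \<Longrightarrow> g \<in> Wdeg i \<Longrightarrow> f - g \<in> (Wdeg i :: ('v ltree \<Rightarrow> 'k::field) set)"
  using add_Wdeg[of f i "-g"] by simp

lemma ind_Wdeg: "nleaves t = i \<Longrightarrow> (ind t :: 'v ltree \<Rightarrow> 'k::field) \<in> Wdeg i"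
  by (auto simp: Wdeg_def ind_def supp_def)

lemma sum_Wdeg[simp]: "(\<And>a. a \<in> A \<Longrightarrow> f a \<in> Wdeg i) \<Longrightarrow> (\<Sum>a\<in>A. f a) \<in> (Wdeg i :: ('v ltree \<Rightarrow> 'k::field) set)"
  by (induction A rule: infinite_finite_induct) auto

lemma Wdeg_Wc: "f \<in> Wdeg i \<Longrightarrow> f \<in> Wc"
  by (simp add: Wdeg_def Wc_def)

lemma Wdeg_induct[consumes 1, case_names zero step]:
  assumes f: "f \<in> Wdeg i" and z: "P 0"
    and st: "\<And>c t g. nleaves t = i \<Longrightarrow> g \<in> Wdeg i \<Longrightarrow> P g \<Longrightarrow> P (sW c (ind t) + g)"
  shows "P f"
proof -
  have fin: "finite (supp f)" using f by (simp add: Wdeg_def)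
  have deg: "\<And>t. t \<in> supp f \<Longrightarrow> nleaves t = i" using f by (auto simp: Wdeg_def supp_def)
  have "\<And>B. B \<subseteq> supp f \<Longrightarrow> P (\<Sum>t\<in>B. sW (f t) (ind t)) \<and> (\<Sum>t\<in>B. sW (f t) (ind t)) \<in> Wdeg i"
  proof -
    fix B assume B: "B \<subseteq> supp f"
    then have "finite B" using fin finite_subset by blast
    then show "P (\<Sum>t\<in>B. sW (f t) (ind t)) \<and> (\<Sum>t\<in>B. sW (f t) (ind t)) \<in> Wdeg i"
      using B
    proof (induction B rule: finite_induct)
      case empty then show ?case using z by simp
    next
      case (insert t B)
      then have IH: "P (\<Sum>t\<in>B. sW (f t) (ind t))" "(\<Sum>t\<in>B. sW (f t) (ind t)) \<in> Wdeg i" by auto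
      have nt: "nleaves t = i" using insert deg by auto
      have "sW (f t) (ind t) + (\<Sum>t\<in>B. sW (f t) (ind t)) \<in> Wdeg i"
        using IH(2) nt by (simp add: ind_Wdeg)
      then show ?case using insert st[OF nt IH(2) IH(1)] by simp
    qed
  qed
  from this[OF order_refl] have "P (lin ind f)" by (simp add: lin_def)
  then show ?thesis using expand[OF Wdeg_Wc[OF f]] by simp
qed

definition subsp :: "('v ltree \<Rightarrow> 'k::field) set \<Rightarrow> bool" where
  "subsp S \<longleftrightarrow> 0 \<in> S \<and> (\<forall>a\<in>S. \<forall>b\<in>S. a + b \<in> S) \<and> (\<forall>c. \<forall>a\<in>S. sW c a \<in> S)"

lemma subsp_0: "subsp S \<Longrightarrow> 0 \<in> S" by (simp add: subsp_def)
lemma subsp_add: "subsp S \<Longrightarrow> a \<in> S \<Longrightarrow> b \<in> S \<Longrightarrow> a + b \<in> S" by (simp add: subsp_def)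
lemma subsp_sW: "subsp S \<Longrightarrow> a \<in> S \<Longrightarrow> sW c a \<in> S" by (simp add: subsp_def)
lemma subsp_uminus: "subsp S \<Longrightarrow> a \<in> S \<Longrightarrow> - a \<in> S" using subsp_sW[of S a "-1"] by simp
lemma subsp_diff: "subsp S \<Longrightarrow> a \<in> S \<Longrightarrow> b \<in> S \<Longrightarrow> a - b \<in> S"
  using subsp_add[of S a "-b"] subsp_uminus[of S b] by simp
lemma subsp_sum: "subsp S \<Longrightarrow> (\<And>x. x \<in> A \<Longrightarrow> f x \<in> S) \<Longrightarrow> (\<Sum>x\<in>A. f x) \<in> S"
  by (induction A rule: infinite_finite_induct) (auto simp: subsp_0 subsp_add)
lemma subsp_diff_cancel: "subsp S \<Longrightarrow> a - b \<in> S \<Longrightarrow> b - c \<in> S \<Longrightarrow> a - c \<in> S"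
  using subsp_add[of S "a - b" "b - c"] by simp

lemma lin_closure_deg:
  assumes S: "subsp S"
    and add: "\<And>f g. L (f + g) = L f + L g" and sc: "\<And>c f. L (sW c f) = sW c (L f)"
    and gen: "\<And>t. nleaves t = i \<Longrightarrow> L (ind t) \<in> S"
    and f: "f \<in> Wdeg i"
  shows "L f \<in> S"
  using f
proof (induction rule: Wdeg_induct)
  case zero
  have "L 0 = sW 0 (L 0)" using sc[of 0 0] by simp
  then show ?case using subsp_0[OF S] by simp
next
  case (step c t g)
  then show ?case using add sc gen S by (simp add: subsp_add subsp_sW)
qed

lemma lin_closure_Wc:
  assumes S: "subsp S"
    and add: "\<And>f g. f \<in> Wc \<Longrightarrow> g \<in> Wc \<Longrightarrow> L (f + g) = L f + L g"
    and sc: "\<And>c f. f \<in> Wc \<Longrightarrow> L (sW c f) = sW c (L f)"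
    and gen: "\<And>t. L (ind t) \<in> S"
    and f: "f \<in> Wc"
  shows "L f \<in> S"
  using f
proof (induction rule: Wc_induct)
  case zero
  have "L 0 = sW 0 (L 0)" using sc[of 0 0] by simp
  then show ?case using subsp_0[OF S] by simp
next
  case (step c t g)
  then show ?case using add sc gen S by (simp add: subsp_add subsp_sW)
qed

lemma lin_ext_eq:
  assumes add1: "\<And>f g. f \<in> Wc \<Longrightarrow> g \<in> Wc \<Longrightarrow> La (f + g) = La f + La g"
    and sc1: "\<And>c f. f \<in> Wc \<Longrightarrow> La (sW c f) = sW c (La f)"
    and add2: "\<And>f g. f \<in> Wc \<Longrightarrow> g \<in> Wc \<Longrightarrow> Lb (f + g) = Lb f + Lb g"
    and sc2: "\<And>c f. f \<in> Wc \<Longrightarrow> Lb (sW c f) = sW c (Lb f)"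
    and gen: "\<And>t. La (ind t) = Lb (ind t)"
    and f: "f \<in> (Wc :: ('v ltree \<Rightarrow> 'k::field) set)"
  shows "La f = Lb f"
  using f
proof (induction rule: Wc_induct)
  case zero
  have "La 0 = sW 0 (La 0)" using sc1[of 0 0] by simp
  moreover have "Lb 0 = sW 0 (Lb 0)" using sc2[of 0 0] by simp
  ultimately show ?case by simp
next
  case (step c t g)
  then show ?case using add1 add2 sc1 sc2 gen by simp
qed

lemma nleaves_ge1: "1 \<le> nleaves t"
  by (induction t) auto

lemma Wdeg_0: assumes f: "f \<in> Wdeg 0" shows "f = 0"
proof (rule ext)
  fix t
  show "f t = 0 t" using nleaves_ge1[of t] f by (auto simp: Wdeg_def zero_fun_apply)
qed

lemma br_Wdeg[simp]: "f \<in> Wdeg i \<Longrightarrow> g \<in> Wdeg j \<Longrightarrow> br f g \<in> (Wdeg (i + j) :: ('v ltree \<Rightarrow> 'k::field) set)"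
proof -
  assume f: "f \<in> Wdeg i" and g: "g \<in> Wdeg j"
  have "br f g \<in> Wc" using f g by (simp add: Wdeg_Wc)
  moreover have "\<forall>t. br f g t \<noteq> 0 \<longrightarrow> nleaves t = i + j"
  proof (intro allI impI)
    fix t assume "br f g t \<noteq> 0"
    then show "nleaves t = i + j" using f g by (cases t) (auto simp: Wdeg_def)
  qed
  ultimately show ?thesis by (simp add: Wdeg_def Wc_def)
qed

lemma Wdeg_cases: "f \<in> Wdeg i \<Longrightarrow> f t \<noteq> 0 \<Longrightarrow> nleaves t = i"
  by (simp add: Wdeg_def)

lemma subsp_R0: "subsp (R0 sV)"
  by (simp add: subsp_def R0.zero R0.add R0.scale)

lemma R0_Wc: "a \<in> R0 sV \<Longrightarrow> a \<in> Wc"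
  by (induction rule: R0.induct) auto

lemma antisym_lin:
  assumes f: "f \<in> Wdeg i" and g: "g \<in> Wdeg j"
  shows "br f g + sW ((-1) ^ (i * j)) (br g f) \<in> R0 sV"
proof -
  have "\<And>s. nleaves s = i \<Longrightarrow> br (ind s) g + sW ((-1) ^ (i * j)) (br g (ind s)) \<in> R0 sV"
  proof -
    fix s :: "'a ltree" assume s: "nleaves s = i"
    show "br (ind s) g + sW ((-1) ^ (i * j)) (br g (ind s)) \<in> R0 sV"
      apply (rule lin_closure_deg[OF subsp_R0 _ _ _ g, where L = "\<lambda>g. br (ind s) g + sW ((-1) ^ (i * j)) (br g (ind s))"])
        apply (simp add: algebra_simps)
       apply (simp add: algebra_simps)
      using R0.antisym[where sV=sV and s=s] s by force
  qed
  then show ?thesis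
    apply (intro lin_closure_deg[OF subsp_R0 _ _ _ f, where L = "\<lambda>f. br f g + sW ((-1) ^ (i * j)) (br g f)"])
      apply (simp add: algebra_simps)
     apply (simp add: algebra_simps)
    by simp
qed

definition jac :: "'k::field \<Rightarrow> ('v ltree \<Rightarrow> 'k) \<Rightarrow> ('v ltree \<Rightarrow> 'k) \<Rightarrow> ('v ltree \<Rightarrow> 'k) \<Rightarrow> ('v ltree \<Rightarrow> 'k)" where
  "jac \<sigma> f g h = br f (br g h) - br (br f g) h - sW \<sigma> (br g (br f h))"

lemma jac_simps:
  "jac \<sigma> (f1 + f2) g h = jac \<sigma> f1 g h + jac \<sigma> f2 g h"
  "jac \<sigma> f (g1 + g2) h = jac \<sigma> f g1 h + jac \<sigma> f g2 h"
  "jac \<sigma> f g (h1 + h2) = jac \<sigma> f g h1 + jac \<sigma> f g h2"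
  "jac \<sigma> (sW c f) g h = sW c (jac \<sigma> f g h)"
  "jac \<sigma> f (sW c g) h = sW c (jac \<sigma> f g h)"
  "jac \<sigma> f g (sW c h) = sW c (jac \<sigma> f g h)"
  by (simp_all add: jac_def algebra_simps)

lemma jacobi_lin:
  assumes f: "f \<in> Wdeg i" and g: "g \<in> Wdeg j" and h: "h \<in> Wdeg k"
  shows "jac ((-1) ^ (i * j)) f g h \<in> R0 sV"
proof -
  have A: "\<And>x y. nleaves x = i \<Longrightarrow> nleaves y = j \<Longrightarrow> jac ((-1) ^ (i * j)) (ind x) (ind y) h \<in> R0 sV"
  proof -
    fix x y :: "'a ltree" assume xy: "nleaves x = i" "nleaves y = j"
    show "jac ((-1) ^ (i * j)) (ind x) (ind y) h \<in> R0 sV"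
      apply (rule lin_closure_deg[OF subsp_R0 _ _ _ h, where L = "jac ((-1) ^ (i * j)) (ind x) (ind y)"])
        apply (simp add: jac_simps)
       apply (simp add: jac_simps)
      using R0.jacobi[where sV=sV and x=x and y=y] xy by (simp add: jac_def)
  qed
  have B: "\<And>x. nleaves x = i \<Longrightarrow> jac ((-1) ^ (i * j)) (ind x) g h \<in> R0 sV"
  proof -
    fix x :: "'a ltree" assume x: "nleaves x = i"
    show "jac ((-1) ^ (i * j)) (ind x) g h \<in> R0 sV"
      apply (rule lin_closure_deg[OF subsp_R0 _ _ _ g, where L = "\<lambda>g. jac ((-1) ^ (i * j)) (ind x) g h"])
        apply (simp add: jac_simps)
       apply (simp add: jac_simps)
      using A x by simp
  qed
  show ?thesis
    apply (rule lin_closure_deg[OF subsp_R0 _ _ _ f, where L = "\<lambda>f. jac ((-1) ^ (i * j)) f g h"])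
      apply (simp add: jac_simps)
     apply (simp add: jac_simps)
    using B by simp
qed

section \<open>The action on formal combinations\<close>

lemma actW_lin: "actW act a = lin (actT act a)"
  by (simp add: fun_eq_iff actW_def lin_def)

lemma actT_Wdeg[simp]: "(actT act a t :: 'v ltree \<Rightarrow> 'k::field) \<in> Wdeg (nleaves t)"
proof (induction t)
  case (Leaf x)
  then show ?case by (simp add: ind_Wdeg)
next
  case (Node s t)
  have "br (actT act a s) (ind t) \<in> (Wdeg (nleaves s + nleaves t) :: ('v ltree \<Rightarrow> 'k) set)"
    using Node(1) by (intro br_Wdeg) (auto simp: ind_Wdeg)
  moreover have "br (ind s) (actT act a t) \<in> (Wdeg (nleaves s + nleaves t) :: ('v ltree \<Rightarrow> 'k) set)"
    using Node(2) by (intro br_Wdeg) (auto simp: ind_Wdeg)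
  ultimately show ?case by simp
qed

lemma actT_Wc[simp]: "actT act a t \<in> Wc"
  using Wdeg_Wc[OF actT_Wdeg] .

lemma lin_Wc[simp]: "(\<And>t. \<phi> t \<in> Wc) \<Longrightarrow> lin \<phi> f \<in> Wc"
  by (simp add: lin_def)

lemma lin_Wdeg: "f \<in> Wdeg i \<Longrightarrow> (\<And>t. nleaves t = i \<Longrightarrow> \<phi> t \<in> Wdeg j) \<Longrightarrow> lin \<phi> f \<in> Wdeg j"
  unfolding lin_def
proof (rule sum_Wdeg)
  fix t assume f: "f \<in> Wdeg i" and ph: "\<And>t. nleaves t = i \<Longrightarrow> \<phi> t \<in> Wdeg j" and t: "t \<in> supp f"
  have "nleaves t = i" using t f by (simp add: supp_def Wdeg_def)
  then show "sW (f t) (\<phi> t) \<in> Wdeg j" using ph by simp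
qed

lemma actW_Wc[simp]: "actW act a f \<in> Wc"
  by (simp add: actW_lin)

lemma actW_Wdeg[simp]: "f \<in> Wdeg i \<Longrightarrow> actW act a f \<in> Wdeg i"
  unfolding actW_lin by (rule lin_Wdeg) auto

lemma actW_simps[simp]:
  "f \<in> Wc \<Longrightarrow> g \<in> Wc \<Longrightarrow> actW act a (f + g) = actW act a f + actW act a g"
  "f \<in> Wc \<Longrightarrow> g \<in> Wc \<Longrightarrow> actW act a (f - g) = actW act a f - actW act a g"
  "actW act a (sW c f) = sW c (actW act a f)"
  "actW act a (- f) = - actW act a f"
  "actW act a 0 = 0"
  "actW act a (ind t) = actT act a t"
  by (simp_all add: actW_lin)

lemma actW_br:
  assumes f: "f \<in> Wc" and g: "g \<in> Wc"
  shows "actW act a (br f g) = br (actW act a f) g + br f (actW act a g)"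
proof -
  have T: "\<And>s. actW act a (br (ind s) g) = br (actW act a (ind s)) g + br (ind s) (actW act a g)"
  proof -
    fix s
    show "actW act a (br (ind s) g) = br (actW act a (ind s)) g + br (ind s) (actW act a g)"
      by (rule lin_ext_eq[OF _ _ _ _ _ g, where La = "\<lambda>g. actW act a (br (ind s) g)"
          and Lb = "\<lambda>g. br (actW act a (ind s)) g + br (ind s) (actW act a g)"]) simp_all
  qed
  show ?thesis
    by (rule lin_ext_eq[OF _ _ _ _ _ f, where La = "\<lambda>f. actW act a (br f g)"
          and Lb = "\<lambda>f. br (actW act a f) g + br f (actW act a g)"]) (simp_all add: g T)
qed

lemma actW_jac:
  assumes f: "f \<in> Wc" and g: "g \<in> Wc" and h: "h \<in> Wc"
  shows "actW act a (jac \<sigma> f g h) = jac \<sigma> (actW act a f) g h + jac \<sigma> f (actW act a g) h + jac \<sigma> f g (actW act a h)"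
  using f g h by (simp add: jac_def actW_br algebra_simps)

lemma actW_R0:
  fixes sV :: "'k::field \<Rightarrow> 'v::ab_group_add \<Rightarrow> 'v" and act :: "'g \<Rightarrow> 'v \<Rightarrow> 'v"
  assumes ad: "\<And>x y. act a (x + y) = act a x + act a y"
    and sc: "\<And>c x. act a (sV c x) = sV c (act a x)"
    and r: "r \<in> R0 sV"
  shows "actW act a r \<in> R0 sV"
  using r
proof (induction rule: R0.induct)
  case (lin_add x y)
  then show ?case using R0.lin_add[where sV=sV and x="act a x" and y="act a y"] by (simp add: ad)
next
  case (lin_scale c x)
  then show ?case using R0.lin_scale[where sV=sV and c=c and x="act a x"] by (simp add: sc)
next
  case (antisym s t)
  have "actW act a (br (ind s) (ind t) + sW ((- 1) ^ (nleaves s * nleaves t)) (br (ind t) (ind s)))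
     = (br (actT act a s) (ind t) + sW ((- 1) ^ (nleaves s * nleaves t)) (br (ind t) (actT act a s)))
     + (br (ind s) (actT act a t) + sW ((- 1) ^ (nleaves s * nleaves t)) (br (actT act a t) (ind s)))"
    by (simp add: algebra_simps)
  also have "\<dots> \<in> R0 sV"
    by (intro R0.add antisym_lin) (auto intro: ind_Wdeg)
  finally show ?case .
next
  case (jacobi x y z)
  let ?s = "(- 1) ^ (nleaves x * nleaves y) :: 'k"
  have "actW act a (jac ?s (ind x) (ind y) (ind z)) = jac ?s (actT act a x) (ind y) (ind z)
     + jac ?s (ind x) (actT act a y) (ind z) + jac ?s (ind x) (ind y) (actT act a z)"
    by (simp add: actW_jac)
  also have "\<dots> \<in> R0 sV"
    by (intro R0.add jacobi_lin[OF actT_Wdeg ind_Wdeg[OF refl] ind_Wdeg[OF refl]]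
        jacobi_lin[OF ind_Wdeg[OF refl] actT_Wdeg ind_Wdeg[OF refl]]
        jacobi_lin[OF ind_Wdeg[OF refl] ind_Wdeg[OF refl] actT_Wdeg])
  finally show ?case by (simp add: jac_def)
next
  case zero
  then show ?case by (simp add: R0.zero)
next
  case (add x y)
  have "x \<in> Wc" "y \<in> Wc" using add R0_Wc by blast+
  then show ?case using add by (simp add: R0.add)
next
  case (scale x c)
  then show ?case by (simp add: R0.scale)
next
  case (ideal_left x w)
  have "x \<in> Wc" using ideal_left R0_Wc by blast
  then show ?case using ideal_left by (simp add: actW_br R0.add R0.ideal_left R0.ideal_right)
next
  case (ideal_right x w)
  have "x \<in> Wc" using ideal_right R0_Wc by blast
  then show ?case using ideal_right by (simp add: actW_br R0.add R0.ideal_left R0.ideal_right)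
qed

section \<open>The ideal K and the total relation space\<close>

lemma Krep_Wdeg: "w \<in> Krep sV act circ \<Longrightarrow> w \<in> Wdeg 2"
  by (auto simp: Krep_def Ksub_def)

lemma KI_Wdeg: "KI sV act circ i a \<Longrightarrow> a \<in> Wdeg i \<and> 2 \<le> i"
proof (induction rule: KI.induct)
  case (base w)
  then show ?case using Krep_Wdeg by auto
next
  case (brk i j f k)
  then have "br f k \<in> Wdeg (j + (i - j))" by (intro br_Wdeg) auto
  then show ?case using brk by simp
qed auto

lemma subsp_Trel: "subsp (Trel sV act circ)"
  by (simp add: subsp_def Trel.add Trel.scale Trel.rel R0.zero)

lemma Trel_Wc: "a \<in> Trel sV act circ \<Longrightarrow> a \<in> Wc"
  by (induction rule: Trel.induct) (auto simp: R0_Wc dest!: KI_Wdeg intro: Wdeg_Wc)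

lemma R0_Trel: "a \<in> R0 sV \<Longrightarrow> a \<in> Trel sV act circ"
  by (rule Trel.rel)

lemma Trel_ideal:
  assumes a: "a \<in> Trel sV act circ"
  shows "w \<in> Wc \<Longrightarrow> br w a \<in> Trel sV act circ \<and> br a w \<in> Trel sV act circ"
  using a
proof (induction arbitrary: w rule: Trel.induct)
  case (rel a)
  then show ?case by (auto intro: Trel.rel R0.ideal_left R0.ideal_right)
next
  case (kid i a)
  have ai: "a \<in> Wdeg i" "2 \<le> i" using KI_Wdeg[OF kid(1)] by auto
  have L: "\<And>t. br (ind t) a \<in> Trel sV act circ"
  proof -
    fix t :: "'a ltree"
    have n: "1 \<le> nleaves t" by (rule nleaves_ge1)
    have "KI sV act circ (i + nleaves t) (br (ind t) a)"
      by (rule KI.brk[where j = "nleaves t"]) (use n ai kid(1) in \<open>auto simp: ind_Wdeg\<close>)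
    then show "br (ind t) a \<in> Trel sV act circ" by (rule Trel.kid)
  qed
  have R: "\<And>t. br a (ind t) \<in> Trel sV act circ"
  proof -
    fix t :: "'a ltree"
    have "br a (ind t) + sW ((-1) ^ (i * nleaves t)) (br (ind t) a) \<in> R0 sV"
      by (rule antisym_lin[OF ai(1) ind_Wdeg]) simp
    then have "br a (ind t) + sW ((-1) ^ (i * nleaves t)) (br (ind t) a) - sW ((-1) ^ (i * nleaves t)) (br (ind t) a)
       \<in> Trel sV act circ"
      by (intro subsp_diff[OF subsp_Trel] subsp_sW[OF subsp_Trel] L Trel.rel)
    then show "br a (ind t) \<in> Trel sV act circ" by simp
  qed
  show ?case
  proof
    show "br w a \<in> Trel sV act circ"
      by (rule lin_closure_Wc[OF subsp_Trel _ _ _ kid(2), where L = "\<lambda>w. br w a"]) (simp_all add: L)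
    show "br a w \<in> Trel sV act circ"
      by (rule lin_closure_Wc[OF subsp_Trel _ _ _ kid(2), where L = "\<lambda>w. br a w"]) (simp_all add: R)
  qed
next
  case (add a b)
  then show ?case by (auto intro: Trel.add)
next
  case (scale a c)
  then show ?case by (auto intro: Trel.scale)
qed

lemma Trel_br_left: "a \<in> Trel sV act circ \<Longrightarrow> w \<in> Wc \<Longrightarrow> br w a \<in> Trel sV act circ"
  using Trel_ideal by blast
lemma Trel_br_right: "a \<in> Trel sV act circ \<Longrightarrow> w \<in> Wc \<Longrightarrow> br a w \<in> Trel sV act circ"
  using Trel_ideal by blast

lemma actW_KI:
  assumes k: "KI sV act circ i k"
  shows "KI sV act circ i (actW act a k)"
  using k
proof (induction rule: KI.induct)
  case (base w)
  then obtain S where "Ksub sV act circ S" "w \<in> S" by (auto simp: Krep_def)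
  then have "actW act a w \<in> S" by (auto simp: Ksub_def)
  then have "actW act a w \<in> Krep sV act circ" using \<open>Ksub sV act circ S\<close> by (auto simp: Krep_def)
  then show ?case by (rule KI.base)
next
  case (brk i j f k)
  have kW: "k \<in> Wc" using KI_Wdeg[OF brk(5)] Wdeg_Wc by blast
  have "actW act a (br f k) = br (actW act a f) k + br f (actW act a k)"
    using Wdeg_Wc[OF brk(4)] kW by (simp add: actW_br)
  moreover have "KI sV act circ i (br (actW act a f) k)"
    using brk by (intro KI.brk) auto
  moreover have "KI sV act circ i (br f (actW act a k))"
    using brk by (intro KI.brk) auto
  ultimately show ?case using brk by (simp add: KI.add)
next
  case (zero i)
  then show ?case by (simp add: KI.zero)
next
  case (add i x y)
  have "x \<in> Wc" "y \<in> Wc" using add KI_Wdeg Wdeg_Wc by meson+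
  then show ?case using add by (simp add: KI.add)
next
  case (scale i x c)
  then show ?case by (simp add: KI.scale)
qed

lemma actW_Trel:
  assumes ad: "\<And>x y. act a (x + y) = act a x + act a y"
    and sc: "\<And>c x. act a (sV c x) = sV c (act a x)"
    and r: "r \<in> Trel sV act circ"
  shows "actW act a r \<in> Trel sV act circ"
  using r
proof (induction rule: Trel.induct)
  case (rel r')
  then show ?case using actW_R0[where act=act and a=a and sV=sV, OF ad sc] by (auto intro: Trel.rel)
next
  case (kid i r')
  show ?case by (rule Trel.kid[OF actW_KI[OF kid]])
next
  case (add x y)
  have "x \<in> Wc" "y \<in> Wc" using add Trel_Wc by blast+
  then show ?case using add by (simp add: Trel.add)
next
  case (scale x c)
  then show ?case by (simp add: Trel.scale)
qed

definition tw :: "('v ltree \<Rightarrow> 'k::field) \<Rightarrow> ('v ltree \<Rightarrow> 'k)" where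
  "tw f = (\<lambda>t. (-1) ^ nleaves t * f t)"

lemma tw_Wdeg: "f \<in> Wdeg i \<Longrightarrow> tw f = sW ((-1) ^ i) f"
  by (auto simp: tw_def sW_def fun_eq_iff Wdeg_def)

lemma tw_br: "tw (br f g) = br (tw f) (tw g)"
  by (auto simp: tw_def br_def fun_eq_iff power_add split: ltree.splits)

lemma tw_simps[simp]: "tw (f + g) = tw f + tw g" "tw (sW c f) = sW c (tw f)" "tw 0 = 0"
  by (auto simp: tw_def sW_def fun_eq_iff algebra_simps fun_applies)

lemma tw_Wc[simp]: "f \<in> Wc \<Longrightarrow> tw f \<in> Wc"
  by (auto simp: tw_def Wc_def supp_def)

lemma tw_R0: "a \<in> R0 sV \<Longrightarrow> tw a \<in> R0 sV"
proof (induction rule: R0.induct)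
  case (lin_add x y)
  have d: "ind (Leaf (x + y)) - ind (Leaf x) - ind (Leaf y) \<in> (Wdeg 1 :: ('a ltree \<Rightarrow> 'b) set)"
    by (simp add: ind_Wdeg)
  show ?case unfolding tw_Wdeg[OF d] by (rule R0.scale[OF R0.lin_add])
next
  case (lin_scale c x)
  have d: "ind (Leaf (sV c x)) - sW c (ind (Leaf x)) \<in> (Wdeg 1 :: ('a ltree \<Rightarrow> 'b) set)"
    by (simp add: ind_Wdeg)
  show ?case unfolding tw_Wdeg[OF d] by (rule R0.scale[OF R0.lin_scale])
next
  case (antisym s t)
  have d: "br (ind s) (ind t) + sW ((- 1) ^ (nleaves s * nleaves t)) (br (ind t) (ind s))
     \<in> (Wdeg (nleaves s + nleaves t) :: ('a ltree \<Rightarrow> 'b) set)"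
    by (intro add_Wdeg sW_Wdeg) (simp_all add: ind_Wdeg add.commute)
  show ?case unfolding tw_Wdeg[OF d] by (rule R0.scale[OF R0.antisym])
next
  case (jacobi x y z)
  let ?n = "nleaves x + nleaves y + nleaves z"
  have "br (ind x) (br (ind y) (ind z)) \<in> (Wdeg ?n :: ('a ltree \<Rightarrow> 'b) set)"
    using br_Wdeg[OF ind_Wdeg[OF refl] br_Wdeg[OF ind_Wdeg[OF refl] ind_Wdeg[OF refl]], of x y z]
    by (simp add: add.assoc)
  moreover have "br (br (ind x) (ind y)) (ind z) \<in> (Wdeg ?n :: ('a ltree \<Rightarrow> 'b) set)"
    using br_Wdeg[OF br_Wdeg[OF ind_Wdeg[OF refl] ind_Wdeg[OF refl]] ind_Wdeg[OF refl], of x y z]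
    by (simp add: add.assoc)
  moreover have "br (ind y) (br (ind x) (ind z)) \<in> (Wdeg ?n :: ('a ltree \<Rightarrow> 'b) set)"
    using br_Wdeg[OF ind_Wdeg[OF refl] br_Wdeg[OF ind_Wdeg[OF refl] ind_Wdeg[OF refl]], of y x z]
    by (simp add: algebra_simps)
  ultimately have d: "br (ind x) (br (ind y) (ind z)) - br (br (ind x) (ind y)) (ind z) -
        sW ((- 1) ^ (nleaves x * nleaves y)) (br (ind y) (br (ind x) (ind z))) \<in> (Wdeg ?n :: ('a ltree \<Rightarrow> 'b) set)"
    by (simp del: br_ind_ind)
  show ?case unfolding tw_Wdeg[OF d] by (rule R0.scale[OF R0.jacobi])
next
  case zero
  then show ?case by (simp add: R0.zero)
next
  case (add a b)
  then show ?case by (simp add: R0.add)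
next
  case (scale a c)
  then show ?case by (simp add: R0.scale)
next
  case (ideal_left a w)
  then show ?case by (simp add: tw_br R0.ideal_left)
next
  case (ideal_right a w)
  then show ?case by (simp add: tw_br R0.ideal_right)
qed

lemma lin_tw: "lin (\<lambda>s. sW ((-1) ^ nleaves s) (\<phi> s)) f = lin \<phi> (tw f)"
proof -
  have "supp (tw f) = supp f" by (auto simp: supp_def tw_def)
  then show ?thesis by (simp add: lin_def tw_def mult.commute)
qed

lemma lin_comp: "f \<in> Wc \<Longrightarrow> (\<And>t. \<psi> t \<in> Wc) \<Longrightarrow> lin \<phi> (lin \<psi> f) = lin (\<lambda>t. lin \<phi> (\<psi> t)) f"
  by (rule lin_ext_eq[where La = "\<lambda>f. lin \<phi> (lin \<psi> f)"]) simp_all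

lemma lin_zero_on: "(\<And>t. t \<in> supp f \<Longrightarrow> \<phi> t = 0) \<Longrightarrow> lin \<phi> f = 0"
  by (simp add: lin_def)

lemma lin_br_nodes: "(\<And>s t. \<phi> (Node s t) = 0) \<Longrightarrow> lin \<phi> (br f g) = 0"
proof (rule lin_zero_on)
  fix t assume "\<And>s t. \<phi> (Node s t) = 0" "t \<in> supp (br f g)"
  then show "\<phi> t = 0" by (cases t) (auto simp: supp_def)
qed

section \<open>The differential on trees\<close>

definition ex :: "('g \<Rightarrow> 'v \<Rightarrow> 'v) \<Rightarrow> ('v \<Rightarrow> 'g) \<Rightarrow> 'v ltree \<Rightarrow> 'v ltree \<Rightarrow> ('v ltree \<Rightarrow> 'k::field)" where
  "ex act Th s t = (case s of Leaf u \<Rightarrow> actT act (Th u) t | Node _ _ \<Rightarrow> 0)"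

fun Dt :: "('g \<Rightarrow> 'v \<Rightarrow> 'v) \<Rightarrow> ('v \<Rightarrow> 'g) \<Rightarrow> 'v ltree \<Rightarrow> ('v ltree \<Rightarrow> 'k::field)" where
  "Dt act Th (Leaf u) = 0"
| "Dt act Th (Node s t) = ex act Th s t + br (Dt act Th s) (ind t)
     + sW ((-1) ^ nleaves s) (br (ind s) (Dt act Th t) - ex act Th t s)"

lemma ex_Leaf[simp]: "ex act Th (Leaf u) t = actT act (Th u) t"
  and ex_Node[simp]: "ex act Th (Node s1 s2) t = 0"
  by (simp_all add: ex_def)

lemma ex_Wc[simp]: "ex act Th s t \<in> Wc"
  by (cases s) auto

lemma Dt_Wc[simp]: "Dt act Th t \<in> Wc"
  by (induction t) auto

lemma Dt_Wdeg: "(Dt act Th t :: 'v ltree \<Rightarrow> 'k::field) \<in> Wdeg (nleaves t - 1)"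
proof (induction t)
  case (Leaf x)
  then show ?case by simp
next
  case (Node s t)
  have s1: "1 \<le> nleaves s" and t1: "1 \<le> nleaves t" by (rule nleaves_ge1)+
  have a: "(ex act Th s t :: 'v ltree \<Rightarrow> 'k) \<in> Wdeg (nleaves s + nleaves t - 1)"
    by (cases s) auto
  have b: "(ex act Th t s :: 'v ltree \<Rightarrow> 'k) \<in> Wdeg (nleaves s + nleaves t - 1)"
    by (cases t) auto
  have c: "br (Dt act Th s) (ind t) \<in> (Wdeg (nleaves s + nleaves t - 1) :: ('v ltree \<Rightarrow> 'k) set)"
    using br_Wdeg[OF Node(1) ind_Wdeg[OF refl], of t] s1 by simp
  have d: "br (ind s) (Dt act Th t) \<in> (Wdeg (nleaves s + nleaves t - 1) :: ('v ltree \<Rightarrow> 'k) set)"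
    using br_Wdeg[OF ind_Wdeg[OF refl] Node(2), of s] t1 by simp
  show ?case using a b c d by simp
qed

lemma lin_in_subsp: "subsp S \<Longrightarrow> (\<And>t. t \<in> supp f \<Longrightarrow> \<phi> t \<in> S) \<Longrightarrow> lin \<phi> f \<in> S"
  unfolding lin_def by (intro subsp_sum) (auto intro: subsp_sW)

lemma lin_fun_diff: "lin (\<lambda>t. \<phi> t - \<psi> t) f = lin \<phi> f - lin \<psi> f"
  by (simp add: lin_def sum_subtractf)

lemma nleaves_1: "nleaves t = 1 \<Longrightarrow> \<exists>x. t = Leaf x"
proof (cases t)
  case (Node s r)
  assume "nleaves t = 1"
  then show ?thesis using Node nleaves_ge1[of s] nleaves_ge1[of r] by simp
qed simp

lemma nleaves_2: "nleaves t = 2 \<Longrightarrow> \<exists>x y. t = Node (Leaf x) (Leaf y)"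
proof (cases t)
  case (Leaf x)
  then show "nleaves t = 2 \<Longrightarrow> ?thesis" by simp
next
  case (Node s r)
  assume "nleaves t = 2"
  then have "nleaves s = 1" "nleaves r = 1" using Node nleaves_ge1[of s] nleaves_ge1[of r] by auto
  then show ?thesis using Node nleaves_1 by blast
qed

lemma supp_Wdeg_Node: "f \<in> Wdeg m \<Longrightarrow> 2 \<le> m \<Longrightarrow> t \<in> supp f \<Longrightarrow> \<exists>t1 t2. t = Node t1 t2"
  by (cases t) (auto simp: supp_def Wdeg_def)

locale LLT =
  fixes sG :: "'k::field_char_0 \<Rightarrow> 'g::ab_group_add \<Rightarrow> 'g"
    and brg :: "'g \<Rightarrow> 'g \<Rightarrow> 'g"
    and sV :: "'k \<Rightarrow> 'v::ab_group_add \<Rightarrow> 'v"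
    and act :: "'g \<Rightarrow> 'v \<Rightarrow> 'v"
    and circ :: "'v \<Rightarrow> 'v \<Rightarrow> 'v"
    and Theta :: "'v \<Rightarrow> 'g"
  assumes llt: "lie_leibniz_triple sG brg sV act circ Theta"

sublocale LLT \<subseteq> V: vector_space sV
  using llt by (simp add: lie_leibniz_triple_def lie_module_def)

context LLT
begin

lemma act_add: "act a (x + y) = act a x + act a y"
  and act_sc: "act a (sV c x) = sV c (act a x)"
  and act_addg: "act (a + b) x = act a x + act b x"
  and act_scg: "act (sG c a) x = sV c (act a x)"
  and act_brg: "act (brg a b) x = act a (act b x) - act b (act a x)"
  using llt by (auto simp: lie_leibniz_triple_def lie_module_def Vector_Spaces.linear_iff)

lemma act_zerog: "act 0 x = 0"
  using act_addg[of 0 0 x] by simp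

lemma Theta_add: "Theta (x + y) = Theta x + Theta y"
  and Theta_sc: "Theta (sV c x) = sG c (Theta x)"
  and circ_def': "circ x y = act (Theta x) y"
  and Theta_circ: "Theta (circ x y) = brg (Theta x) (Theta y)"
  using llt by (auto simp: lie_leibniz_triple_def Vector_Spaces.linear_iff)

lemma brg_add1: "brg (a + b) c = brg a c + brg b c"
  and brg_add2: "brg c (a + b) = brg c a + brg c b"
  and brg_self: "brg a a = 0"
  using llt by (auto simp: lie_leibniz_triple_def lie_algebra_def Vector_Spaces.linear_iff)

lemma brg_anti: "brg a b + brg b a = 0"
proof -
  have "brg (a + b) (a + b) = brg a a + brg a b + (brg b a + brg b b)"
    by (simp add: brg_add1 brg_add2 add.assoc)
  then show ?thesis by (simp add: brg_self)
qed

lemma anticomm2: "sV 2 (anticomm sV circ x y) = circ x y + circ y x"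
  by (simp add: anticomm_def)

abbreviation R where "R \<equiv> Trel sV act circ"

lemma ind_Leaf0: "ind (Leaf 0) \<in> R0 sV"
  using R0.lin_scale[where sV=sV and c=0 and x=0] by simp

lemma leaf_add: "ind (Leaf (x + y)) - (ind (Leaf x) + ind (Leaf y)) \<in> R0 sV"
  using R0.lin_add[where sV=sV and x=x and y=y] by (simp add: diff_diff_eq)

lemma leaf_sum: "(\<Sum>a\<in>A. sW (c a) (ind (Leaf (\<phi> a)))) - ind (Leaf (\<Sum>a\<in>A. sV (c a) (\<phi> a))) \<in> R0 sV"
proof (induction A rule: infinite_finite_induct)
  case (infinite A)
  then show ?case using ind_Leaf0 by (simp add: subsp_uminus[OF subsp_R0])
next
  case empty
  then show ?case using ind_Leaf0 by (simp add: subsp_uminus[OF subsp_R0])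
next
  case (insert a A)
  let ?S = "(\<Sum>a\<in>A. sW (c a) (ind (Leaf (\<phi> a))))" and ?T = "(\<Sum>a\<in>A. sV (c a) (\<phi> a))"
  have e: "(\<Sum>a\<in>insert a A. sW (c a) (ind (Leaf (\<phi> a)))) - ind (Leaf (\<Sum>a\<in>insert a A. sV (c a) (\<phi> a)))
    = (?S - ind (Leaf ?T)) - (ind (Leaf (sV (c a) (\<phi> a))) - sW (c a) (ind (Leaf (\<phi> a))))
      - (ind (Leaf (sV (c a) (\<phi> a) + ?T)) - (ind (Leaf (sV (c a) (\<phi> a))) + ind (Leaf ?T)))"
    using insert by (simp add: algebra_simps)
  show ?case unfolding e
    by (intro subsp_diff[OF subsp_R0] insert R0.lin_scale leaf_add)
qed

lemma L_add: "actT act (a + b) t - (actT act a t + actT act b t) \<in> R0 sV"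
proof (induction t)
  case (Leaf x)
  then show ?case using leaf_add by (simp add: act_addg)
next
  case (Node s t)
  have e: "actT act (a + b) (Node s t) - (actT act a (Node s t) + actT act b (Node s t))
    = br (actT act (a + b) s - (actT act a s + actT act b s)) (ind t)
      + br (ind s) (actT act (a + b) t - (actT act a t + actT act b t))"
    by (simp add: algebra_simps)
  show ?case unfolding e by (intro R0.add R0.ideal_left R0.ideal_right Node) simp_all
qed

lemma L_sc: "actT act (sG c a) t - sW c (actT act a t) \<in> R0 sV"
proof (induction t)
  case (Leaf x)
  then show ?case using R0.lin_scale by (simp add: act_scg)
next
  case (Node s t)
  have e: "actT act (sG c a) (Node s t) - sW c (actT act a (Node s t))
    = br (actT act (sG c a) s - sW c (actT act a s)) (ind t)
      + br (ind s) (actT act (sG c a) t - sW c (actT act a t))"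
    by (simp add: algebra_simps)
  show ?case unfolding e by (intro R0.add R0.ideal_left R0.ideal_right Node) simp_all
qed

lemma L_zero: "actT act 0 t \<in> R0 sV"
proof (induction t)
  case (Leaf x)
  then show ?case using ind_Leaf0 by (simp add: act_zerog)
next
  case (Node s t)
  then show ?case by (simp add: R0.add R0.ideal_left R0.ideal_right)
qed

lemma L_brg: "actT act (brg a b) t - (actW act a (actT act b t) - actW act b (actT act a t)) \<in> R0 sV"
proof (induction t)
  case (Leaf x)
  have "ind (Leaf (act a (act b x))) - (ind (Leaf (act a (act b x) - act b (act a x))) + ind (Leaf (act b (act a x))))
     \<in> R0 sV" using leaf_add[of "act a (act b x) - act b (act a x)" "act b (act a x)"] by simp
  then have "- (ind (Leaf (act a (act b x))) - (ind (Leaf (act a (act b x) - act b (act a x))) + ind (Leaf (act b (act a x)))))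
     \<in> R0 sV" by (rule subsp_uminus[OF subsp_R0])
  then show ?case by (simp add: act_brg algebra_simps)
next
  case (Node s t)
  have e: "actT act (brg a b) (Node s t) - (actW act a (actT act b (Node s t)) - actW act b (actT act a (Node s t)))
    = br (actT act (brg a b) s - (actW act a (actT act b s) - actW act b (actT act a s))) (ind t)
      + br (ind s) (actT act (brg a b) t - (actW act a (actT act b t) - actW act b (actT act a t)))"
    by (simp add: actW_br algebra_simps)
  show ?case unfolding e by (intro R0.add R0.ideal_left R0.ideal_right Node) simp_all
qed

definition leafx :: "('v \<Rightarrow> ('v ltree \<Rightarrow> 'k)) \<Rightarrow> 'v ltree \<Rightarrow> ('v ltree \<Rightarrow> 'k)" where
  "leafx \<Phi> t = (case t of Leaf u \<Rightarrow> \<Phi> u | Node _ _ \<Rightarrow> 0)"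

lemma leafx_R0:
  assumes ad: "\<And>x y. \<Phi> (x + y) - (\<Phi> x + \<Phi> y) \<in> R0 sV"
    and sc: "\<And>c x. \<Phi> (sV c x) - sW c (\<Phi> x) \<in> R0 sV"
    and r: "r \<in> R0 sV"
  shows "lin (leafx \<Phi>) r \<in> R0 sV"
  using r
proof (induction rule: R0.induct)
  case (lin_add x y)
  have "lin (leafx \<Phi>) (ind (Leaf (x + y)) - ind (Leaf x) - ind (Leaf y)) = \<Phi> (x + y) - (\<Phi> x + \<Phi> y)"
    by (simp add: leafx_def)
  then show ?case using ad by simp
next
  case (lin_scale c x)
  have "lin (leafx \<Phi>) (ind (Leaf (sV c x)) - sW c (ind (Leaf x))) = \<Phi> (sV c x) - sW c (\<Phi> x)"
    by (simp add: leafx_def)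
  then show ?case using sc by simp
next
  case (antisym s t)
  have "lin (leafx \<Phi>) (br (ind s) (ind t) + sW ((- 1) ^ (nleaves s * nleaves t)) (br (ind t) (ind s))) = 0"
    by (simp del: br_ind_ind add: lin_br_nodes leafx_def)
  then show ?case by (simp add: R0.zero)
next
  case (jacobi x y z)
  have "lin (leafx \<Phi>) (br (ind x) (br (ind y) (ind z)) - br (br (ind x) (ind y)) (ind z) -
          sW ((- 1) ^ (nleaves x * nleaves y)) (br (ind y) (br (ind x) (ind z)))) = 0"
    by (simp del: br_ind_ind add: lin_br_nodes leafx_def)
  then show ?case by (simp add: R0.zero)
next
  case zero
  then show ?case by (simp add: R0.zero)
next
  case (add a b)
  have "a \<in> Wc" "b \<in> Wc" using add R0_Wc by blast+
  then show ?case using add by (simp add: R0.add)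
next
  case (scale a c)
  then show ?case by (simp add: R0.scale)
next
  case (ideal_left a w)
  then show ?case by (simp add: lin_br_nodes leafx_def R0.zero)
next
  case (ideal_right a w)
  then show ?case by (simp add: lin_br_nodes leafx_def R0.zero)
qed

lemma leafx_actT_R0: "r \<in> R0 sV \<Longrightarrow> lin (leafx (\<lambda>u. actT act (Theta u) t)) r \<in> R0 sV"
  by (rule leafx_R0) (simp_all add: Theta_add Theta_sc L_add L_sc)

abbreviation D where "D \<equiv> Dt act Theta"
abbreviation Dw where "Dw \<equiv> lin D"
abbreviation exx where "exx \<equiv> ex act Theta"

lemma m1_sq: "(-1::'k) ^ n * (-1) ^ n = 1"
  by (simp add: minus_one_power_iff)

lemma m1_shift: "1 \<le> n \<Longrightarrow> (-1::'k) ^ ((n - 1) * m) = (-1) ^ (n * m) * (-1) ^ m"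
  by (simp add: minus_one_power_iff even_mult_iff)

lemma Dw_ind[simp]: "Dw (ind t) = D t"
  by simp

lemma Dw_Wc[simp]: "Dw f \<in> Wc"
  by simp

lemma exx_Leaf_fun: "exx (Leaf u) = actT act (Theta u)"
  by (rule ext) simp

lemma lin_ex_Leaf[simp]: "lin (exx (Leaf u)) g = actW act (Theta u) g"
  by (simp add: actW_lin exx_Leaf_fun)

lemma lin_ex_Node[simp]: "lin (exx (Node s1 s2)) g = 0"
  by (rule lin_zero_on) simp

lemma lin_ex_leafx: "lin (\<lambda>s. exx s t) f = lin (leafx (\<lambda>u. actT act (Theta u) t)) f"
  by (rule lin_cong) (auto simp: leafx_def split: ltree.splits)

lemma DL: assumes g: "g \<in> Wc"
  shows "Dw (br (ind s) g) = lin (exx s) g + br (D s) g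
     + sW ((-1) ^ nleaves s) (br (ind s) (Dw g) - lin (\<lambda>t. exx t s) g)"
  by (rule lin_ext_eq[OF _ _ _ _ _ g, where La = "\<lambda>g. Dw (br (ind s) g)"])
     (simp_all add: algebra_simps)

lemma DR: assumes f: "f \<in> Wc"
  shows "Dw (br f (ind t)) = lin (\<lambda>s. exx s t) f + br (Dw f) (ind t)
     + br (tw f) (D t) - lin (\<lambda>s. exx t s) (tw f)"
proof (rule lin_ext_eq[OF _ _ _ _ _ f, where La = "\<lambda>f. Dw (br f (ind t))"])
  fix s :: "'v ltree"
  have tws: "tw (ind s) = sW ((-1) ^ nleaves s) (ind s)"
    by (rule tw_Wdeg) (simp add: ind_Wdeg)
  show "Dw (br (ind s) (ind t)) = lin (\<lambda>s. exx s t) (ind s) + br (Dw (ind s)) (ind t)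
     + br (tw (ind s)) (D t) - lin (\<lambda>s. exx t s) (tw (ind s))"
    unfolding tws by (simp add: algebra_simps)
qed (simp_all add: algebra_simps)

lemma antisym_D1:
  "br (D s) (ind t) + sW ((-1) ^ (nleaves s * nleaves t) * (-1) ^ nleaves t) (br (ind t) (D s)) \<in> R0 sV"
proof (cases "nleaves s = 1")
  case True
  then have "(D s :: 'v ltree \<Rightarrow> 'k) = 0" using Dt_Wdeg[of act Theta s] Wdeg_0 by force
  then show ?thesis by (simp add: R0.zero)
next
  case False
  have s1: "1 \<le> nleaves s" by (rule nleaves_ge1)
  have "br (D s) (ind t) + sW ((-1) ^ ((nleaves s - 1) * nleaves t)) (br (ind t) (D s)) \<in> R0 sV"
    by (rule antisym_lin[OF Dt_Wdeg ind_Wdeg[OF refl]])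
  then show ?thesis using m1_shift[OF s1, of "nleaves t"] by simp
qed

lemma sW_m1_sq: "sW ((-1) ^ n) (sW ((-1) ^ n * c) f) = sW (c :: 'k) f"
  by (simp add: mult.assoc[symmetric] m1_sq)

lemma D_antisym: "D (Node s t) + sW ((-1) ^ (nleaves s * nleaves t)) (D (Node t s)) \<in> R0 sV"
proof -
  let ?\<sigma> = "(-1::'k) ^ (nleaves s * nleaves t)" and ?es = "(-1::'k) ^ nleaves s" and ?et = "(-1::'k) ^ nleaves t"
  have A: "br (D s) (ind t) + sW (?\<sigma> * ?et) (br (ind t) (D s)) \<in> R0 sV"
    by (rule antisym_D1)
  have B0: "br (D t) (ind s) + sW (?\<sigma> * ?es) (br (ind s) (D t)) \<in> R0 sV"
    using antisym_D1[of t s] by (simp add: mult.commute)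
  have B: "sW ?\<sigma> (br (D t) (ind s)) + sW ?es (br (ind s) (D t)) \<in> R0 sV"
    using R0.scale[OF B0, of ?\<sigma>] by (simp add: sW_m1_sq del: sW_simps(4) add: sW_simps(1))
  have X: "sW (1 - ?\<sigma> * ?et) (exx s t) + sW (?\<sigma> - ?es) (exx t s) = 0"
  proof (cases s)
    case (Leaf u)
    then have "?\<sigma> * ?et = 1" by (simp add: m1_sq)
    moreover have "sW (?\<sigma> - ?es) (exx t s) = 0"
      by (cases t) (use Leaf in auto)
    ultimately show ?thesis by simp
  next
    case (Node s1 s2)
    then show ?thesis by (cases t) (auto simp: m1_sq)
  qed
  have e: "D (Node s t) + sW ?\<sigma> (D (Node t s)) =
     (br (D s) (ind t) + sW (?\<sigma> * ?et) (br (ind t) (D s)))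
     + (sW ?\<sigma> (br (D t) (ind s)) + sW ?es (br (ind s) (D t)))
     + (sW (1 - ?\<sigma> * ?et) (exx s t) + sW (?\<sigma> - ?es) (exx t s))"
    by (simp add: algebra_simps sW_diff_left)
  show ?thesis unfolding e X using A B by (simp add: R0.add)
qed

lemma m1_cancel: "(-1::'k) ^ n * (c * (-1) ^ n) = c"
  by (metis m1_sq mult.commute mult.left_commute mult_1_right)

lemma D_zero_if: "nleaves x = 1 \<Longrightarrow> (D x :: 'v ltree \<Rightarrow> 'k) = 0"
  using Dt_Wdeg[of act Theta x] Wdeg_0 by force

lemma D_jacobi:
  "Dw (jac ((-1) ^ (nleaves x * nleaves y)) (ind x) (ind y) (ind z)) \<in> R0 sV"
proof -
  let ?\<sigma> = "(-1::'k) ^ (nleaves x * nleaves y)"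
  let ?ex = "(-1::'k) ^ nleaves x" and ?ey = "(-1::'k) ^ nleaves y" and ?exy = "(-1::'k) ^ (nleaves x + nleaves y)"
  define G1 where "G1 = jac (?\<sigma> * ?ey) (D x) (ind y) (ind z)"
  define G2 where "G2 = sW ?ex (br (ind x) (br (D y) (ind z))) - sW ?ex (br (br (ind x) (D y)) (ind z))
     - sW ?\<sigma> (br (D y) (br (ind x) (ind z)))"
  define G3 where "G3 = sW ?ex (sW ?ey (br (ind x) (br (ind y) (D z)))) - sW ?exy (br (br (ind x) (ind y)) (D z))
     - sW ?\<sigma> (sW ?ey (sW ?ex (br (ind y) (br (ind x) (D z)))))"
  define X where "X = exx x (Node y z) - br (exx x y) (ind z) - sW ?\<sigma> (sW ?ey (br (ind y) (exx x z)))"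
  define Y where "Y = sW ?ex (br (ind x) (exx y z)) + sW ?ex (br (exx y x) (ind z)) - sW ?\<sigma> (exx y (Node x z))"
  define Z where "Z = sW ?exy (exx z (Node x y)) - sW ?ex (sW ?ey (br (ind x) (exx z y)))
     + sW ?\<sigma> (sW ?ey (sW ?ex (br (ind y) (exx z x))))"
  have e: "Dw (jac ?\<sigma> (ind x) (ind y) (ind z)) = G1 + G2 + G3 + X + Y + Z"
    unfolding G1_def G2_def G3_def X_def Y_def Z_def
    by (simp add: jac_def algebra_simps)
  have g1: "G1 \<in> R0 sV"
  proof (cases "nleaves x = 1")
    case True
    then show ?thesis by (simp add: G1_def D_zero_if jac_def R0.zero)
  next
    case False
    have "jac ((-1) ^ ((nleaves x - 1) * nleaves y)) (D x) (ind y) (ind z) \<in> R0 sV"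
      by (rule jacobi_lin[OF Dt_Wdeg ind_Wdeg[OF refl] ind_Wdeg[OF refl]])
    then show ?thesis unfolding G1_def using m1_shift[OF nleaves_ge1, of x "nleaves y"] by simp
  qed
  have g2: "G2 \<in> R0 sV"
  proof (cases "nleaves y = 1")
    case True
    then show ?thesis by (simp add: G2_def D_zero_if R0.zero)
  next
    case False
    have "jac ((-1) ^ (nleaves x * (nleaves y - 1))) (ind x) (D y) (ind z) \<in> R0 sV"
      by (rule jacobi_lin[OF ind_Wdeg[OF refl] Dt_Wdeg ind_Wdeg[OF refl]])
    moreover have "(-1::'k) ^ (nleaves x * (nleaves y - 1)) = ?\<sigma> * ?ex"
      using m1_shift[OF nleaves_ge1, of y "nleaves x"] by (simp add: mult.commute)
    ultimately have "jac (?\<sigma> * ?ex) (ind x) (D y) (ind z) \<in> R0 sV" by simp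
    then have "sW ?ex (jac (?\<sigma> * ?ex) (ind x) (D y) (ind z)) \<in> R0 sV" by (rule R0.scale)
    moreover have "sW ?ex (jac (?\<sigma> * ?ex) (ind x) (D y) (ind z)) = G2"
      unfolding G2_def jac_def by (simp add: m1_cancel)
    ultimately show ?thesis by simp
  qed
  have g3: "G3 \<in> R0 sV"
  proof -
    have "jac ?\<sigma> (ind x) (ind y) (D z) \<in> R0 sV"
      by (rule jacobi_lin[OF ind_Wdeg[OF refl] ind_Wdeg[OF refl] Dt_Wdeg])
    then have "sW ?exy (jac ?\<sigma> (ind x) (ind y) (D z)) \<in> R0 sV" by (rule R0.scale)
    moreover have "sW ?exy (jac ?\<sigma> (ind x) (ind y) (D z)) = G3"
      unfolding G3_def jac_def by (simp add: power_add mult_ac)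
    ultimately show ?thesis by simp
  qed
  have x: "X = 0"
  proof (cases x)
    case (Leaf u)
    then have "?\<sigma> * ?ey = 1" by (simp add: m1_sq)
    then show ?thesis using Leaf by (simp add: X_def)
  next
    case (Node x1 x2)
    then show ?thesis by (simp add: X_def)
  qed
  have y: "Y = 0"
  proof (cases y)
    case (Leaf u)
    then show ?thesis by (simp add: Y_def algebra_simps)
  next
    case (Node y1 y2)
    then show ?thesis by (simp add: Y_def)
  qed
  have z: "Z \<in> R0 sV"
  proof (cases z)
    case (Leaf w)
    have "br (actT act (Theta w) x) (ind y) + sW ?\<sigma> (br (ind y) (actT act (Theta w) x)) \<in> R0 sV"
      by (rule antisym_lin[OF actT_Wdeg ind_Wdeg[OF refl]])
    then have "sW ?exy (br (actT act (Theta w) x) (ind y) + sW ?\<sigma> (br (ind y) (actT act (Theta w) x))) \<in> R0 sV"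
      by (rule R0.scale)
    moreover have "sW ?exy (br (actT act (Theta w) x) (ind y) + sW ?\<sigma> (br (ind y) (actT act (Theta w) x))) = Z"
      unfolding Z_def using Leaf by (simp add: power_add algebra_simps)
    ultimately show ?thesis by simp
  next
    case (Node z1 z2)
    then show ?thesis by (simp add: Z_def R0.zero)
  qed
  show ?thesis unfolding e x y using g1 g2 g3 z by (simp add: R0.add)
qed

lemma actW_R0': "r \<in> R0 sV \<Longrightarrow> actW act g r \<in> R0 sV"
  by (rule actW_R0[where act=act and a=g and sV=sV, OF act_add act_sc])

lemma actW_Trel': "r \<in> R \<Longrightarrow> actW act g r \<in> R"
  by (rule actW_Trel[where act=act and a=g and sV=sV, OF act_add act_sc])

lemma lin_exx_R0: "a \<in> R0 sV \<Longrightarrow> lin (exx s) a \<in> R0 sV"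
  by (cases s) (simp_all add: actW_R0' R0.zero)

lemma Dw_R0: "r \<in> R0 sV \<Longrightarrow> Dw r \<in> R0 sV"
proof (induction rule: R0.induct)
  case (lin_add x y)
  then show ?case by (simp add: R0.zero)
next
  case (lin_scale c x)
  then show ?case by (simp add: R0.zero)
next
  case (antisym s t)
  have "Dw (br (ind s) (ind t) + sW ((- 1) ^ (nleaves s * nleaves t)) (br (ind t) (ind s)))
     = D (Node s t) + sW ((- 1) ^ (nleaves s * nleaves t)) (D (Node t s))"
    by (simp del: Dt.simps)
  then show ?case using D_antisym by simp
next
  case (jacobi x y z)
  then show ?case using D_jacobi[of x y z] by (simp add: jac_def del: Dt.simps)
next
  case zero
  then show ?case by (simp add: R0.zero)
next
  case (add a b)
  have "a \<in> Wc" "b \<in> Wc" using add R0_Wc by blast+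
  then show ?case using add by (simp add: R0.add)
next
  case (scale a c)
  then show ?case by (simp add: R0.scale)
next
  case (ideal_left a w)
  have aW: "a \<in> Wc" using ideal_left R0_Wc by blast
  have wW: "w \<in> Wc" using ideal_left by blast
  have gen: "\<And>s. Dw (br (ind s) a) \<in> R0 sV"
  proof -
    fix s :: "'v ltree"
    have "lin (\<lambda>t. exx t s) a \<in> R0 sV"
      unfolding lin_ex_leafx by (rule leafx_actT_R0[OF ideal_left(1)])
    then show "Dw (br (ind s) a) \<in> R0 sV"
      unfolding DL[OF aW]
      by (intro R0.add R0.scale subsp_diff[OF subsp_R0] lin_exx_R0 ideal_left R0.ideal_left) simp_all
  qed
  show ?case
    by (rule lin_closure_Wc[OF subsp_R0 _ _ _ wW, where L = "\<lambda>w. Dw (br w a)"])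
       (simp_all add: aW gen)
next
  case (ideal_right a w)
  have aW: "a \<in> Wc" using ideal_right R0_Wc by blast
  have wW: "w \<in> Wc" using ideal_right by blast
  have gen: "\<And>t. Dw (br a (ind t)) \<in> R0 sV"
  proof -
    fix t :: "'v ltree"
    have 1: "lin (\<lambda>s. exx s t) a \<in> R0 sV"
      unfolding lin_ex_leafx by (rule leafx_actT_R0[OF ideal_right(1)])
    have 2: "lin (\<lambda>s. exx t s) (tw a) \<in> R0 sV"
      using lin_exx_R0[OF tw_R0[OF ideal_right(1)], of t] by simp
    show "Dw (br a (ind t)) \<in> R0 sV"
      unfolding DR[OF aW]
      by (intro R0.add subsp_diff[OF subsp_R0] 1 2 R0.ideal_right ideal_right tw_R0) simp_all
  qed
  show ?case
    by (rule lin_closure_Wc[OF subsp_R0 _ _ _ wW, where L = "\<lambda>w. Dw (br a w)"])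
       (simp_all add: aW gen)
qed

lemma lin_exx_noleaf: "f \<in> Wdeg m \<Longrightarrow> 2 \<le> m \<Longrightarrow> lin (\<lambda>s. exx s r) f = 0"
  by (rule lin_zero_on) (auto dest: supp_Wdeg_Node)

lemma D_Node_Leaf_Leaf: "(D (Node (Leaf x) (Leaf y)) :: 'v ltree \<Rightarrow> 'k)
   = ind (Leaf (act (Theta x) y)) + ind (Leaf (act (Theta y) x))"
  by simp

lemma Dw_Krep:
  assumes w: "w \<in> Krep sV act circ"
  shows "Dw w \<in> R0 sV"
proof -
  obtain S where S: "Ksub sV act circ S" "w \<in> S" using w by (auto simp: Krep_def)
  have w2: "w \<in> Wdeg 2" and sym: "sym2 sV circ w = 0" using S by (auto simp: Ksub_def)
  let ?\<psi> = "\<lambda>t. ind (Leaf (sV 2 (symb sV circ t))) :: 'v ltree \<Rightarrow> 'k"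
  have 1: "lin (\<lambda>t. D t - ?\<psi> t) w \<in> R0 sV"
  proof (rule lin_in_subsp[OF subsp_R0])
    fix t assume "t \<in> supp w"
    then have "nleaves t = 2" using w2 by (simp add: supp_def Wdeg_def)
    then obtain x y where t: "t = Node (Leaf x) (Leaf y)" using nleaves_2 by blast
    have "sV 2 (symb sV circ t) = act (Theta x) y + act (Theta y) x"
      by (simp add: t symb_def anticomm2 circ_def')
    then have "D t - ?\<psi> t = - (ind (Leaf (act (Theta x) y + act (Theta y) x))
        - (ind (Leaf (act (Theta x) y)) + ind (Leaf (act (Theta y) x))))"
      by (simp add: t)
    then show "D t - ?\<psi> t \<in> R0 sV" using subsp_uminus[OF subsp_R0 leaf_add] by simp
  qed
  have "(\<Sum>t\<in>supp w. sW (w t) (ind (Leaf (sV 2 (symb sV circ t)))))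
      - ind (Leaf (\<Sum>t\<in>supp w. sV (w t) (sV 2 (symb sV circ t)))) \<in> R0 sV"
    by (rule leaf_sum)
  moreover have "(\<Sum>t\<in>supp w. sV (w t) (sV 2 (symb sV circ t))) = sV 2 (sym2 sV circ w)"
    by (simp add: sym2_def V.scale_sum_right mult.commute)
  ultimately have "lin ?\<psi> w - ind (Leaf 0) \<in> R0 sV" by (simp add: sym lin_def)
  then have 2: "lin ?\<psi> w \<in> R0 sV" using subsp_add[OF subsp_R0 _ ind_Leaf0] by fastforce
  have "Dw w = lin (\<lambda>t. D t - ?\<psi> t) w + lin ?\<psi> w" by (simp add: lin_fun_diff)
  then show ?thesis using 1 2 by (simp add: R0.add)
qed

lemma Dw_KI: "KI sV act circ i k \<Longrightarrow> Dw k \<in> R"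
proof (induction rule: KI.induct)
  case (base w)
  then show ?case using Dw_Krep by (blast intro: Trel.rel)
next
  case (brk i j f k)
  have kR: "k \<in> R" using brk(5) by (rule Trel.kid)
  have kW: "k \<in> Wc" using kR Trel_Wc by blast
  have k2: "k \<in> Wdeg (i - j)" "2 \<le> i - j" using KI_Wdeg[OF brk(5)] by auto
  have gen: "\<And>s. Dw (br (ind s) k) \<in> R"
  proof -
    fix s :: "'v ltree"
    have 1: "lin (exx s) k \<in> R" by (cases s) (simp_all add: actW_Trel' kR subsp_0[OF subsp_Trel])
    have 2: "lin (\<lambda>t. exx t s) k = 0" by (rule lin_exx_noleaf[OF k2])
    show "Dw (br (ind s) k) \<in> R"
      unfolding DL[OF kW] 2
      by (intro subsp_add[OF subsp_Trel] subsp_sW[OF subsp_Trel] subsp_diff[OF subsp_Trel] 1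
          Trel_br_left kR brk(6) subsp_0[OF subsp_Trel]) simp_all
  qed
  show ?case
    by (rule lin_closure_Wc[OF subsp_Trel _ _ _ Wdeg_Wc[OF brk(4)], where L = "\<lambda>f. Dw (br f k)"])
       (simp_all add: kW gen)
next
  case (zero i)
  then show ?case by (simp add: subsp_0[OF subsp_Trel])
next
  case (add i a b)
  have "a \<in> Wc" "b \<in> Wc" using add KI_Wdeg Wdeg_Wc by meson+
  then show ?case using add by (simp add: Trel.add)
next
  case (scale i a c)
  then show ?case by (simp add: Trel.scale)
qed

lemma Dw_Trel: "r \<in> R \<Longrightarrow> Dw r \<in> R"
proof (induction rule: Trel.induct)
  case (rel a)
  then show ?case using Dw_R0 by (blast intro: Trel.rel)
next
  case (kid i a)
  then show ?case by (rule Dw_KI)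
next
  case (add a b)
  have "a \<in> Wc" "b \<in> Wc" using add Trel_Wc by blast+
  then show ?case using add by (simp add: Trel.add)
next
  case (scale a c)
  then show ?case by (simp add: Trel.scale)
qed

lemma Theta_act: "Theta (act (Theta w) u) = brg (Theta w) (Theta u)"
  using Theta_circ[of w u] by (simp add: circ_def')

lemma lin_exx_actT_Node: "lin (\<lambda>s'. exx s' t) (actT act a (Node s1 s2)) = 0"
proof (rule lin_exx_noleaf[OF actT_Wdeg])
  show "2 \<le> nleaves (Node s1 s2)" using nleaves_ge1[of s1] nleaves_ge1[of s2] by simp
qed

lemma D_equiv_tree:
  assumes a: "a = Theta w0"
  shows "Dw (actT act a t) - actW act a (D t) \<in> R0 sV"
proof (induction t)
  case (Leaf x)
  then show ?case by (simp add: R0.zero)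
next
  case (Node s t)
  let ?es = "(-1::'k) ^ nleaves s"
  let ?A = "actT act a :: 'v ltree \<Rightarrow> 'v ltree \<Rightarrow> 'k"
  have tws: "tw (?A s) = sW ?es (?A s)" by (rule tw_Wdeg[OF actT_Wdeg])
  define Xs where "Xs = lin (\<lambda>s'. exx s' t) (?A s) + lin (exx s) (?A t) - actW act a (exx s t)"
  define Xt where "Xt = actW act a (exx t s) - lin (exx t) (?A s) - lin (\<lambda>t'. exx t' s) (?A t)"
  have e: "Dw (actT act a (Node s t)) - actW act a (D (Node s t))
     = br (Dw (?A s) - actW act a (D s)) (ind t) + sW ?es (br (ind s) (Dw (?A t) - actW act a (D t)))
       + Xs + sW ?es Xt"
    unfolding Xs_def Xt_def
    by (simp add: DL DR tws actW_br algebra_simps del: Dt.simps) (simp add: actW_br algebra_simps)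
  have xs: "Xs \<in> R0 sV"
  proof (cases s)
    case (Leaf u)
    have "Xs = actT act (brg a (Theta u)) t - (actW act a (actT act (Theta u) t) - actW act (Theta u) (actT act a t))"
      by (simp add: Xs_def Leaf a Theta_act)
    then show ?thesis using L_brg by simp
  next
    case (Node s1 s2)
    then show ?thesis by (simp add: Xs_def lin_exx_actT_Node R0.zero del: actT.simps)
  qed
  have xt: "Xt \<in> R0 sV"
  proof (cases t)
    case (Leaf v)
    have "Xt = - (actT act (brg a (Theta v)) s - (actW act a (actT act (Theta v) s) - actW act (Theta v) (actT act a s)))"
      by (simp add: Xt_def Leaf a Theta_act algebra_simps)
    then show ?thesis using subsp_uminus[OF subsp_R0 L_brg] by simp
  next
    case (Node t1 t2)
    then show ?thesis by (simp add: Xt_def lin_exx_actT_Node R0.zero del: actT.simps)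
  qed
  show ?case unfolding e
    by (intro R0.add R0.scale R0.ideal_left R0.ideal_right Node xs xt) simp_all
qed

lemma D_equiv:
  assumes a: "a = Theta w0" and f: "f \<in> Wc"
  shows "Dw (actW act a f) - actW act a (Dw f) \<in> R0 sV"
  by (rule lin_closure_Wc[OF subsp_R0 _ _ _ f, where L = "\<lambda>f. Dw (actW act a f) - actW act a (Dw f)"])
     (simp_all add: algebra_simps D_equiv_tree[OF a])

lemma W_lemma: "lin (\<lambda>s'. exx s' r) (D s) \<in> R0 sV"
proof -
  consider "nleaves s = 1" | "nleaves s = 2" | "3 \<le> nleaves s" using nleaves_ge1[of s] by linarith
  then show ?thesis
  proof cases
    case 1
    then show ?thesis by (simp add: D_zero_if R0.zero)
  next
    case 2
    then obtain x y where s: "s = Node (Leaf x) (Leaf y)" using nleaves_2 by blast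
    let ?X = "Theta x" and ?Y = "Theta y"
    have e: "lin (\<lambda>s'. exx s' r) (D s) = - (actT act (brg ?X ?Y + brg ?Y ?X) r
         - (actT act (brg ?X ?Y) r + actT act (brg ?Y ?X) r)) + actT act (brg ?X ?Y + brg ?Y ?X) r"
      by (simp add: s Theta_act)
    have z: "actT act (brg ?X ?Y + brg ?Y ?X) r \<in> R0 sV" using L_zero by (simp add: brg_anti)
    show ?thesis unfolding e
      by (intro R0.add subsp_uminus[OF subsp_R0] L_add z)
  next
    case 3
    show ?thesis by (subst lin_exx_noleaf[OF Dt_Wdeg]) (use 3 in \<open>simp_all add: R0.zero\<close>)
  qed
qed

lemma m1_pred: "1 \<le> n \<Longrightarrow> (-1::'k) ^ (n - 1) = - ((-1) ^ n)"
  by (simp add: minus_one_power_iff)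

lemma D_sq_tree: "Dw (D t) \<in> R0 sV"
proof (induction t)
  case (Leaf x)
  then show ?case by (simp add: R0.zero)
next
  case (Node s t)
  let ?es = "(-1::'k) ^ nleaves s"
  let ?mu = "(-1::'k) ^ (nleaves s - 1)"
  have mu: "?mu = - ?es" by (rule m1_pred[OF nleaves_ge1])
  have tws: "tw (D s) = sW ?mu (D s)" by (rule tw_Wdeg[OF Dt_Wdeg])
  define T3 where "T3 = br (sW ?mu (D s)) (D t) + sW ?es (br (D s) (D t))"
  define Qs where "Qs = Dw (exx s t) + sW ?es (lin (exx s) (D t))"
  define Qt where "Qt = - lin (exx t) (sW ?mu (D s)) - sW ?es (Dw (exx t s))"
  define Ws where "Ws = (lin (\<lambda>s'. exx s' t) (D s) :: 'v ltree \<Rightarrow> 'k)"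
  define Wt where "Wt = - sW ?es (sW ?es (lin (\<lambda>t'. exx t' s) (D t)))"
  have e: "Dw (D (Node s t)) = br (Dw (D s)) (ind t) + sW ?es (sW ?es (br (ind s) (Dw (D t))))
     + T3 + Qs + Qt + Ws + Wt"
    unfolding T3_def Qs_def Qt_def Ws_def Wt_def Dt.simps(2)
    by (simp add: DL DR tws algebra_simps del: Dt.simps)
  have "sW (- ?es) (br (D s) (D t)) = - sW ?es (br (D s) (D t))"
    by (simp add: sW_def fun_eq_iff uminus_apply)
  then have t3: "T3 = 0" unfolding T3_def mu by simp
  have qs: "Qs \<in> R0 sV"
  proof (cases s)
    case (Leaf u)
    have "Qs = Dw (actW act (Theta u) (ind t)) - actW act (Theta u) (Dw (ind t))"
      by (simp add: Qs_def Leaf exx_Leaf_fun actW_lin del: Dt.simps)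
    then show ?thesis using D_equiv[OF refl, of "ind t" u] by simp
  next
    case (Node s1 s2)
    then show ?thesis by (simp add: Qs_def R0.zero del: Dt.simps)
  qed
  have qt: "Qt \<in> R0 sV"
  proof (cases t)
    case (Leaf v)
    have q: "Qt = - sW ?es (Dw (actW act (Theta v) (ind s)) - actW act (Theta v) (Dw (ind s)))"
      unfolding Qt_def Leaf mu by (simp add: exx_Leaf_fun actW_lin sW_neg del: Dt.simps)
    show ?thesis unfolding q
      by (rule subsp_uminus[OF subsp_R0 R0.scale[OF D_equiv[OF refl, of "ind s" v]]]) simp
  next
    case (Node t1 t2)
    then show ?thesis by (simp add: Qt_def R0.zero del: Dt.simps)
  qed
  have ws: "Ws \<in> R0 sV" unfolding Ws_def by (rule W_lemma)
  have wt: "Wt \<in> R0 sV" unfolding Wt_def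
    by (intro subsp_uminus[OF subsp_R0] R0.scale W_lemma)
  have p1: "br (Dw (D s)) (ind t) \<in> R0 sV" by (rule R0.ideal_right[OF Node(1)]) simp
  have p2: "br (ind s) (Dw (D t)) \<in> R0 sV" by (rule R0.ideal_left[OF Node(2)]) simp
  show ?case unfolding e t3
    by (intro R0.add R0.scale p1 p2 qs qt ws wt R0.zero)
qed

lemma D_sq: "f \<in> Wc \<Longrightarrow> Dw (Dw f) \<in> R0 sV"
  by (simp add: lin_comp) (rule lin_in_subsp[OF subsp_R0 D_sq_tree])

section \<open>Quotient level\<close>

lemma qt_self: "x \<in> Wc \<Longrightarrow> x \<in> qt R x"
  by (simp add: qt_def subsp_0[OF subsp_Trel])

lemma rep_qt: "x \<in> Wc \<Longrightarrow> rep (qt R x) \<in> Wc \<and> rep (qt R x) - x \<in> R"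
proof -
  assume x: "x \<in> Wc"
  have "rep (qt R x) \<in> qt R x" unfolding rep_def by (rule someI[where P = "\<lambda>w. w \<in> qt R x", OF qt_self[OF x]])
  then show ?thesis by (simp add: qt_def)
qed

lemma qt_eq: "x - y \<in> R \<Longrightarrow> qt R x = qt R y"
proof -
  assume d: "x - y \<in> R"
  have "\<And>w. w - x \<in> R \<longleftrightarrow> w - y \<in> R"
  proof -
    fix w
    have "w - y = (w - x) + (x - y)" "w - x = (w - y) - (x - y)" by simp_all
    then show "w - x \<in> R \<longleftrightarrow> w - y \<in> R"
      using d subsp_add[OF subsp_Trel] subsp_diff[OF subsp_Trel] by metis
  qed
  then show ?thesis by (auto simp: qt_def)
qed

lemma R0_R: "a \<in> R0 sV \<Longrightarrow> a \<in> R" by (rule Trel.rel)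

lemma tadd_qt: "x \<in> Wc \<Longrightarrow> y \<in> Wc \<Longrightarrow> tadd R (qt R x) (qt R y) = qt R (x + y)"
  unfolding tadd_def
proof (rule qt_eq)
  assume x: "x \<in> Wc" and y: "y \<in> Wc"
  have e: "rep (qt R x) + rep (qt R y) - (x + y) = (rep (qt R x) - x) + (rep (qt R y) - y)" by simp
  show "rep (qt R x) + rep (qt R y) - (x + y) \<in> R"
    unfolding e using rep_qt[OF x] rep_qt[OF y] by (simp add: subsp_add[OF subsp_Trel])
qed

lemma tsub_qt: "x \<in> Wc \<Longrightarrow> y \<in> Wc \<Longrightarrow> tsub R (qt R x) (qt R y) = qt R (x - y)"
  unfolding tsub_def
proof (rule qt_eq)
  assume x: "x \<in> Wc" and y: "y \<in> Wc"
  have e: "rep (qt R x) - rep (qt R y) - (x - y) = (rep (qt R x) - x) - (rep (qt R y) - y)" by simp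
  show "rep (qt R x) - rep (qt R y) - (x - y) \<in> R"
    unfolding e using rep_qt[OF x] rep_qt[OF y] by (simp add: subsp_diff[OF subsp_Trel])
qed

lemma tsc_qt: "x \<in> Wc \<Longrightarrow> tsc R c (qt R x) = qt R (sW c x)"
  unfolding tsc_def
proof (rule qt_eq)
  assume x: "x \<in> Wc"
  have e: "sW c (rep (qt R x)) - sW c x = sW c (rep (qt R x) - x)" by simp
  show "sW c (rep (qt R x)) - sW c x \<in> R"
    unfolding e by (rule subsp_sW[OF subsp_Trel]) (use rep_qt[OF x] in blast)
qed

lemma tbr_qt: "x \<in> Wc \<Longrightarrow> y \<in> Wc \<Longrightarrow> tbr R (qt R x) (qt R y) = qt R (br x y)"
  unfolding tbr_def
proof (rule qt_eq)
  assume x: "x \<in> Wc" and y: "y \<in> Wc"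
  have e: "br (rep (qt R x)) (rep (qt R y)) - br x y
      = br (rep (qt R x) - x) (rep (qt R y)) + br x (rep (qt R y) - y)" by (simp add: algebra_simps)
  show "br (rep (qt R x)) (rep (qt R y)) - br x y \<in> R"
    unfolding e by (rule subsp_add[OF subsp_Trel Trel_br_right Trel_br_left]) (use rep_qt[OF x] rep_qt[OF y] x in auto)
qed

lemma tact_qt: "x \<in> Wc \<Longrightarrow> tact act R a (qt R x) = qt R (actW act a x)"
  unfolding tact_def
proof (rule qt_eq)
  assume x: "x \<in> Wc"
  have e: "actW act a (rep (qt R x)) - actW act a x = actW act a (rep (qt R x) - x)"
    using rep_qt[OF x] x by simp
  show "actW act a (rep (qt R x)) - actW act a x \<in> R"
    unfolding e using rep_qt[OF x] by (simp add: actW_Trel')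
qed

definition dd :: "nat \<Rightarrow> ('v ltree \<Rightarrow> 'k) set \<Rightarrow> ('v ltree \<Rightarrow> 'k) set" where
  "dd i X = qt R (Dw (rep X))"

lemma dd_qt: "x \<in> Wc \<Longrightarrow> dd i (qt R x) = qt R (Dw x)"
  unfolding dd_def
proof (rule qt_eq)
  assume x: "x \<in> Wc"
  have e: "Dw (rep (qt R x)) - Dw x = Dw (rep (qt R x) - x)"
    using rep_qt[OF x] x by simp
  show "Dw (rep (qt R x)) - Dw x \<in> R"
    unfolding e using rep_qt[OF x] by (simp add: Dw_Trel)
qed

lemma Dw_Wdeg: "x \<in> Wdeg m \<Longrightarrow> Dw x \<in> Wdeg (m - 1)"
  by (rule lin_Wdeg) (auto intro: Dt_Wdeg[of act Theta, simplified])

lemma Dw_br_deg: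
  assumes x: "x \<in> Wdeg i" and y: "y \<in> Wdeg j" and i: "2 \<le> i" and j: "2 \<le> j"
  shows "Dw (br x y) = br (Dw x) y + sW ((-1) ^ i) (br x (Dw y))"
  using x
proof (induction rule: Wdeg_induct)
  case zero
  then show ?case by simp
next
  case (step c t g)
  have yW: "y \<in> Wc" using y Wdeg_Wc by blast
  have gW: "g \<in> Wc" using step Wdeg_Wc by blast
  obtain t1 t2 where t: "t = Node t1 t2" using step(1) i by (cases t) auto
  have "Dw (br (ind t) y) = br (Dw (ind t)) y + sW ((-1) ^ i) (br (ind t) (Dw y))"
    unfolding DL[OF yW] lin_exx_noleaf[OF y j] using step(1) by (simp add: t del: Dt.simps)
  then show ?case using step yW gW by (simp add: algebra_simps)
qed

lemma Tdeg_E: "X \<in> Tdeg R i \<Longrightarrow> (\<And>x. x \<in> Wdeg i \<Longrightarrow> X = qt R x \<Longrightarrow> P) \<Longrightarrow> P"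
  by (auto simp: Tdeg_def)

lemma Tdeg_I: "x \<in> Wdeg i \<Longrightarrow> qt R x \<in> Tdeg R i"
  by (simp add: Tdeg_def)

lemma iota_qt: "iota R x = qt R (ind (Leaf x))"
  by (simp add: iota_def)

lemma dd_1: "1 \<le> i \<Longrightarrow> X \<in> Tdeg R (Suc i) \<Longrightarrow> dd i X \<in> Tdeg R i"
  by (erule Tdeg_E) (simp add: dd_qt Wdeg_Wc Tdeg_I Dw_Wdeg[of _ "Suc i", simplified])

lemma dd_2: "X \<in> Tdeg R (Suc i) \<Longrightarrow> Y \<in> Tdeg R (Suc i) \<Longrightarrow> dd i (tadd R X Y) = tadd R (dd i X) (dd i Y)"
  by (erule Tdeg_E)+ (simp add: dd_qt tadd_qt Wdeg_Wc)

lemma dd_3: "X \<in> Tdeg R (Suc i) \<Longrightarrow> dd i (tsc R c X) = tsc R c (dd i X)"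
  by (erule Tdeg_E) (simp add: dd_qt tsc_qt Wdeg_Wc)

lemma dd_4: "a \<in> range Theta \<Longrightarrow> X \<in> Tdeg R (Suc i) \<Longrightarrow> dd i (tact act R a X) = tact act R a (dd i X)"
proof (erule Tdeg_E)
  fix x assume a: "a \<in> range Theta" and x: "x \<in> Wdeg (Suc i)" and X: "X = qt R x"
  obtain w0 where w0: "a = Theta w0" using a by auto
  have xW: "x \<in> Wc" using x Wdeg_Wc by blast
  show "dd i (tact act R a X) = tact act R a (dd i X)"
    unfolding X using xW by (simp add: dd_qt tact_qt) (rule qt_eq[OF R0_R[OF D_equiv[OF w0 xW]]])
qed

lemma dd_5: "dd 1 (tbr R (iota R x) (iota R y)) = iota R (sV 2 (anticomm sV circ x y))"
proof -
  have "dd 1 (tbr R (iota R x) (iota R y)) = qt R (ind (Leaf (act (Theta x) y)) + ind (Leaf (act (Theta y) x)))"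
    by (simp add: iota_qt tbr_qt dd_qt)
  also have "\<dots> = qt R (ind (Leaf (act (Theta x) y + act (Theta y) x)))"
    by (rule qt_eq[OF R0_R]) (use subsp_uminus[OF subsp_R0 leaf_add] in simp)
  finally show ?thesis by (simp add: iota_qt anticomm2 circ_def')
qed

lemma dd_6: "2 \<le> i \<Longrightarrow> X \<in> Tdeg R i \<Longrightarrow>
   dd i (tbr R (iota R x) X) = tsub R (tact act R (Theta x) X) (tbr R (iota R x) (dd (i - 1) X))"
proof (erule Tdeg_E)
  fix w assume i: "2 \<le> i" and w: "w \<in> Wdeg i" and X: "X = qt R w"
  have wW: "w \<in> Wc" using w Wdeg_Wc by blast
  have "Dw (br (ind (Leaf x)) w) = actW act (Theta x) w - br (ind (Leaf x)) (Dw w)"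
    unfolding DL[OF wW] lin_exx_noleaf[OF w i] by simp
  then show "dd i (tbr R (iota R x) X) = tsub R (tact act R (Theta x) X) (tbr R (iota R x) (dd (i - 1) X))"
    unfolding X using wW by (simp add: iota_qt tbr_qt dd_qt tact_qt tsub_qt)
qed

lemma dd_7: "2 \<le> i \<Longrightarrow> 2 \<le> j \<Longrightarrow> X \<in> Tdeg R i \<Longrightarrow> Y \<in> Tdeg R j \<Longrightarrow>
   dd (i + j - 1) (tbr R X Y) = tadd R (tbr R (dd (i - 1) X) Y) (tsc R ((-1) ^ i) (tbr R X (dd (j - 1) Y)))"
proof (erule Tdeg_E, erule Tdeg_E)
  fix x y assume i: "2 \<le> i" and j: "2 \<le> j" and x: "x \<in> Wdeg i" and X: "X = qt R x"
    and y: "y \<in> Wdeg j" and Y: "Y = qt R y"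
  have xW: "x \<in> Wc" using x Wdeg_Wc by blast
  have yW: "y \<in> Wc" using y Wdeg_Wc by blast
  show "dd (i + j - 1) (tbr R X Y) = tadd R (tbr R (dd (i - 1) X) Y) (tsc R ((-1) ^ i) (tbr R X (dd (j - 1) Y)))"
    unfolding X Y using xW yW by (simp add: tbr_qt dd_qt tsc_qt tadd_qt Dw_br_deg[OF x y i j])
qed

lemma dd_family: "is_dfamily sV act circ Theta dd"
  unfolding is_dfamily_def Let_def
  by (intro conjI allI impI ballI dd_1 dd_2 dd_3 dd_4 dd_5 dd_6 dd_7) auto

lemma dd_sq: "X \<in> Tdeg R (i + 2) \<Longrightarrow> dd i (dd (Suc i) X) = tzero R"
proof (erule Tdeg_E)
  fix x assume x: "x \<in> Wdeg (i + 2)" and X: "X = qt R x"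
  have xW: "x \<in> Wc" using x Wdeg_Wc by blast
  show "dd i (dd (Suc i) X) = tzero R"
    unfolding X tzero_def using xW
    by (simp add: dd_qt) (rule qt_eq, use R0_R[OF D_sq[OF xW]] in simp)
qed

lemma dfam_1: "is_dfamily sV act circ Theta d \<Longrightarrow> 1 \<le> i \<Longrightarrow> X \<in> Tdeg R (Suc i) \<Longrightarrow> d i X \<in> Tdeg R i"
  by (simp add: is_dfamily_def Let_def)
lemma dfam_2: "is_dfamily sV act circ Theta d \<Longrightarrow> 1 \<le> i \<Longrightarrow> X \<in> Tdeg R (Suc i) \<Longrightarrow> Y \<in> Tdeg R (Suc i)
   \<Longrightarrow> d i (tadd R X Y) = tadd R (d i X) (d i Y)"
  by (simp add: is_dfamily_def Let_def)
lemma dfam_3: "is_dfamily sV act circ Theta d \<Longrightarrow> 1 \<le> i \<Longrightarrow> X \<in> Tdeg R (Suc i)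
   \<Longrightarrow> d i (tsc R c X) = tsc R c (d i X)"
  by (simp add: is_dfamily_def Let_def)
lemma dfam_5: "is_dfamily sV act circ Theta d \<Longrightarrow> d 1 (tbr R (iota R x) (iota R y)) = iota R (sV 2 (anticomm sV circ x y))"
  by (simp add: is_dfamily_def Let_def)
lemma dfam_6: "is_dfamily sV act circ Theta d \<Longrightarrow> 2 \<le> i \<Longrightarrow> X \<in> Tdeg R i \<Longrightarrow>
   d i (tbr R (iota R x) X) = tsub R (tact act R (Theta x) X) (tbr R (iota R x) (d (i - 1) X))"
  by (simp add: is_dfamily_def Let_def)
lemma dfam_7: "is_dfamily sV act circ Theta d \<Longrightarrow> 2 \<le> i \<Longrightarrow> 2 \<le> j \<Longrightarrow> X \<in> Tdeg R i \<Longrightarrow> Y \<in> Tdeg R j \<Longrightarrow>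
   d (i + j - 1) (tbr R X Y) = tadd R (tbr R (d (i - 1) X) Y) (tsc R ((-1) ^ i) (tbr R X (d (j - 1) Y)))"
  by (simp add: is_dfamily_def Let_def)

lemma dfam_zero:
  assumes d: "is_dfamily sV act circ Theta d" and i: "1 \<le> i"
  shows "d i (qt R 0) = qt R 0"
proof -
  have X: "qt R 0 \<in> Tdeg R (Suc i)" by (rule Tdeg_I) simp
  have "tsc R 0 (qt R 0) = qt R 0" by (simp add: tsc_qt)
  then have "d i (qt R 0) = tsc R 0 (d i (qt R 0))" using dfam_3[OF d i X, of 0] by simp
  moreover obtain z where z: "z \<in> Wdeg i" "d i (qt R 0) = qt R z" using dfam_1[OF d i X] by (rule Tdeg_E)
  ultimately show ?thesis using Wdeg_Wc[OF z(1)] by (simp add: tsc_qt)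
qed

lemma dfam_unique:
  assumes d1: "is_dfamily sV act circ Theta d1" and d2: "is_dfamily sV act circ Theta d2"
  shows "1 \<le> i \<Longrightarrow> w \<in> Wdeg (Suc i) \<Longrightarrow> d1 i (qt R w) = d2 i (qt R w)"
proof (induction i arbitrary: w rule: less_induct)
  case (less i)
  note i = less.prems(1)
  have IH: "\<And>m X. m < i \<Longrightarrow> 1 \<le> m \<Longrightarrow> X \<in> Tdeg R (Suc m) \<Longrightarrow> d1 m X = d2 m X"
    using less.IH by (auto elim: Tdeg_E)
  have LN: "\<And>b x'. 2 \<le> i \<Longrightarrow> x' \<in> Wdeg i \<Longrightarrow>
      d1 i (tbr R (iota R b) (qt R x')) = d2 i (tbr R (iota R b) (qt R x'))"
  proof -
    fix b :: 'v and x' :: "'v ltree \<Rightarrow> 'k" assume i2: "2 \<le> i" and x': "x' \<in> Wdeg i"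
    have X: "qt R x' \<in> Tdeg R i" by (rule Tdeg_I[OF x'])
    have "d1 (i - 1) (qt R x') = d2 (i - 1) (qt R x')"
      by (rule IH) (use i2 X in auto)
    then show "d1 i (tbr R (iota R b) (qt R x')) = d2 i (tbr R (iota R b) (qt R x'))"
      using dfam_6[OF d1 i2 X] dfam_6[OF d2 i2 X] by simp
  qed
  have tree: "\<And>t. nleaves t = Suc i \<Longrightarrow> d1 i (qt R (ind t)) = d2 i (qt R (ind t))"
  proof -
    fix t :: "'v ltree" assume nt: "nleaves t = Suc i"
    then obtain s r where t: "t = Node s r" using i by (cases t) auto
    have ns: "1 \<le> nleaves s" and nr: "1 \<le> nleaves r" by (rule nleaves_ge1)+
    have nsr: "nleaves s + nleaves r = Suc i" using nt t by simp
    show "d1 i (qt R (ind t)) = d2 i (qt R (ind t))"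
    proof (cases s)
      case (Leaf a)
      show ?thesis
      proof (cases r)
        case (Leaf b)
        have i1: "i = 1" using nsr \<open>s = Leaf a\<close> Leaf by simp
        have "qt R (ind t) = tbr R (iota R a) (iota R b)"
          by (simp add: t \<open>s = Leaf a\<close> Leaf iota_qt tbr_qt)
        then show ?thesis using dfam_5[OF d1] dfam_5[OF d2] i1 by simp
      next
        case (Node r1 r2)
        have ir: "nleaves r = i" using nsr \<open>s = Leaf a\<close> by simp
        have i2: "2 \<le> i" using ir Node nleaves_ge1[of r1] nleaves_ge1[of r2] by simp
        have "qt R (ind t) = tbr R (iota R a) (qt R (ind r))"
          by (simp add: t \<open>s = Leaf a\<close> iota_qt tbr_qt)
        then show ?thesis using LN[OF i2 ind_Wdeg[OF ir]] by simp
      qed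
    next
      case (Node s1 s2)
      show ?thesis
      proof (cases r)
        case (Leaf b)
        have is': "nleaves s = i" using nsr Leaf by simp
        have i2: "2 \<le> i" using is' Node nleaves_ge1[of s1] nleaves_ge1[of s2] by simp
        let ?c = "- ((-1::'k) ^ (i * 1))"
        have as: "br (ind s) (ind r) + sW ((-1) ^ (i * 1)) (br (ind r) (ind s)) \<in> R0 sV"
          by (rule antisym_lin[OF ind_Wdeg[OF is'] ind_Wdeg]) (simp add: Leaf)
        have "qt R (ind t) = qt R (sW ?c (ind (Node r s)))"
          by (rule qt_eq[OF R0_R]) (use as in \<open>simp add: t sW_neg\<close>)
        also have "\<dots> = tsc R ?c (tbr R (iota R b) (qt R (ind s)))"
          by (simp add: Leaf iota_qt tbr_qt tsc_qt)
        finally have e: "qt R (ind t) = tsc R ?c (tbr R (iota R b) (qt R (ind s)))" .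
        have Y: "tbr R (iota R b) (qt R (ind s)) \<in> Tdeg R (Suc i)"
          unfolding iota_qt tbr_qt[OF ind_Wc ind_Wc] br_ind_ind
          by (rule Tdeg_I, rule ind_Wdeg) (simp add: is')
        show ?thesis unfolding e dfam_3[OF d1 i Y] dfam_3[OF d2 i Y]
          using LN[OF i2 ind_Wdeg[OF is']] by simp
      next
        case (Node r1 r2)
        have s2: "2 \<le> nleaves s" using \<open>s = Node s1 s2\<close> nleaves_ge1[of s1] nleaves_ge1[of s2] by simp
        have r2: "2 \<le> nleaves r" using Node nleaves_ge1[of r1] nleaves_ge1[of r2] by simp
        have X: "qt R (ind s) \<in> Tdeg R (nleaves s)" by (rule Tdeg_I, rule ind_Wdeg) simp
        have Y: "qt R (ind r) \<in> Tdeg R (nleaves r)" by (rule Tdeg_I, rule ind_Wdeg) simp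
        have e: "qt R (ind t) = tbr R (qt R (ind s)) (qt R (ind r))"
          by (simp add: t tbr_qt)
        have ie: "i = nleaves s + nleaves r - 1" using nsr by simp
        have h1: "d1 (nleaves s - 1) (qt R (ind s)) = d2 (nleaves s - 1) (qt R (ind s))"
          by (rule IH) (use s2 nsr r2 X in auto)
        have h2: "d1 (nleaves r - 1) (qt R (ind r)) = d2 (nleaves r - 1) (qt R (ind r))"
          by (rule IH) (use s2 nsr r2 Y in auto)
        show ?thesis unfolding e ie dfam_7[OF d1 s2 r2 X Y] dfam_7[OF d2 s2 r2 X Y] h1 h2 ..
      qed
    qed
  qed
  show ?case using less.prems(2)
  proof (induction rule: Wdeg_induct)
    case zero
    then show ?case using dfam_zero[OF d1 i] dfam_zero[OF d2 i] by simp
  next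
    case (step c t g)
    have gW: "g \<in> Wc" using step Wdeg_Wc by blast
    have e: "qt R (sW c (ind t) + g) = tadd R (tsc R c (qt R (ind t))) (qt R g)"
      using gW by (simp add: tsc_qt tadd_qt)
    have A: "tsc R c (qt R (ind t)) \<in> Tdeg R (Suc i)"
      by (simp add: tsc_qt, rule Tdeg_I) (simp add: ind_Wdeg step(1))
    have B: "qt R g \<in> Tdeg R (Suc i)" by (rule Tdeg_I[OF step(2)])
    have T: "qt R (ind t) \<in> Tdeg R (Suc i)" by (rule Tdeg_I, rule ind_Wdeg[OF step(1)])
    show ?case unfolding e dfam_2[OF d1 i A B] dfam_2[OF d2 i A B] dfam_3[OF d1 i T] dfam_3[OF d2 i T]
      using tree[OF step(1)] step(3) by simp
  qed
qed

end

theorem mainTheorem7: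
  fixes sG :: "'k::field_char_0 \<Rightarrow> 'g::ab_group_add \<Rightarrow> 'g"
    and brg :: "'g \<Rightarrow> 'g \<Rightarrow> 'g"
    and sV :: "'k \<Rightarrow> 'v::ab_group_add \<Rightarrow> 'v"
    and act :: "'g \<Rightarrow> 'v \<Rightarrow> 'v"
    and circ :: "'v \<Rightarrow> 'v \<Rightarrow> 'v"
    and Theta :: "'v \<Rightarrow> 'g"
  assumes "lie_leibniz_triple sG brg sV act circ Theta"
  shows "\<exists>d. is_dfamily sV act circ Theta d
           \<and> (\<forall>d'. is_dfamily sV act circ Theta d' \<longrightarrow>
                (\<forall>i\<ge>1. \<forall>X\<in>Tdeg (Trel sV act circ) (Suc i). d' i X = d i X))
           \<and> (\<forall>i\<ge>1. \<forall>X\<in>Tdeg (Trel sV act circ) (i + 2).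
                d i (d (Suc i) X) = tzero (Trel sV act circ))"
proof -
  interpret L: LLT sG brg sV act circ Theta using assms by (simp add: LLT_def)
  show ?thesis
  proof (intro exI conjI allI impI ballI)
    show "is_dfamily sV act circ Theta L.dd" by (rule L.dd_family)
  next
    fix d' i X assume d': "is_dfamily sV act circ Theta d'" and i: "1 \<le> i"
      and X: "X \<in> Tdeg (Trel sV act circ) (Suc i)"
    then obtain w where w: "w \<in> Wdeg (Suc i)" "X = qt (Trel sV act circ) w" by (auto elim: L.Tdeg_E)
    show "d' i X = L.dd i X" unfolding w(2) by (rule L.dfam_unique[OF d' L.dd_family i w(1)])
  next
    fix i X assume "1 \<le> i" and X: "X \<in> Tdeg (Trel sV act circ) (i + 2)"
    show "L.dd i (L.dd (Suc i) X) = tzero (Trel sV act circ)" by (rule L.dd_sq[OF X])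
  qed
qed

end
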